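(* For every $\varepsilon>0$ there exists $C>0$ such that the following holds. Let $G$ be a connected graph on vertex set $[n]$, let $R\sim G(n,\varepsilon/n)$ and $G^*=G\cup R$. Then asymptotically almost surely the diameter of $G^*$ is at most $C\log n$.
   Context: $G(n,p)$ denotes the binomial random graph on $[n]$ with each pair an edge independently with probability $p$; $G\cup R$ is the graph on $[n]$ with edge set the union of those of $G$ and $R$. Asymptotically almost surely means with probability tending to $1$ as $n\to\infty$, for an arbitrary sequence of such graphs $G=G_n$. *)

theory Defs
  imports "HOL-Probability.Probability"
begin

text \<open>Simple graphs on the vertex set [n] = {1..n}, represented by their edge sets:
  an edge is a 2-element set of vertices.\<close>

definition all_edges :: "nat \<Rightarrow> nat set set" where
  "all_edges n = {{u, v} | u v. u \<in> {1..n} \<and> v \<in> {1..n} \<and> u \<noteq> v}"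

definition is_graph :: "nat \<Rightarrow> nat set set \<Rightarrow> bool" where
  "is_graph n E \<longleftrightarrow> E \<subseteq> all_edges n"

definition is_walk :: "nat set set \<Rightarrow> nat list \<Rightarrow> bool" where
  "is_walk E xs \<longleftrightarrow> xs \<noteq> [] \<and> (\<forall>i. Suc i < length xs \<longrightarrow> {xs ! i, xs ! Suc i} \<in> E)"

definition graph_connected :: "nat \<Rightarrow> nat set set \<Rightarrow> bool" where
  "graph_connected n E \<longleftrightarrow>
     (\<forall>u\<in>{1..n}. \<forall>v\<in>{1..n}. \<exists>xs. is_walk E xs \<and> hd xs = u \<and> last xs = v)"

text \<open>Graph distance (infinite if no walk exists) and diameter.\<close>
definition graph_dist :: "nat set set \<Rightarrow> nat \<Rightarrow> nat \<Rightarrow> enat" where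
  "graph_dist E u v =
     (INF xs \<in> {xs. is_walk E xs \<and> hd xs = u \<and> last xs = v}. enat (length xs - 1))"

definition graph_diam :: "nat \<Rightarrow> nat set set \<Rightarrow> enat" where
  "graph_diam n E = (SUP u \<in> {1..n}. SUP v \<in> {1..n}. graph_dist E u v)"

definition gnp :: "nat \<Rightarrow> real \<Rightarrow> nat set set pmf" where
  "gnp n p = map_pmf (\<lambda>f. {e \<in> all_edges n. f e})
                (Pi_pmf (all_edges n) False (\<lambda>_. bernoulli_pmf p))"

end

theory Submission
  imports Defs "HOL-Real_Asymp.Real_Asymp"
begin

definition rs :: "nat set set \<Rightarrow> real \<Rightarrow> nat set set pmf" where
  "rs S p = map_pmf (\<lambda>f. {e \<in> S. f e}) (Pi_pmf S False (\<lambda>_. bernoulli_pmf p))"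

lemma gnp_rs: "gnp n p = rs (all_edges n) p"
  by (simp add: gnp_def rs_def)

lemma finite_all_edges: "finite (all_edges n)"
proof -
  have "all_edges n \<subseteq> Pow {1..n}" by (auto simp: all_edges_def)
  thus ?thesis by (rule finite_subset) auto
qed

lemma set_rs: "R \<in> set_pmf (rs S p) \<Longrightarrow> R \<subseteq> S"
  by (auto simp: rs_def)

lemma rs_union:
  assumes "finite X" "finite Y" "X \<inter> Y = {}"
  shows "rs (X \<union> Y) p = map_pmf (\<lambda>(A,B). A \<union> B) (pair_pmf (rs X p) (rs Y p))"
proof -
  have "rs (X \<union> Y) p = map_pmf (\<lambda>(f,g). {e \<in> X \<union> Y. if e \<in> X then f e else g e})
          (pair_pmf (Pi_pmf X False (\<lambda>_. bernoulli_pmf p)) (Pi_pmf Y False (\<lambda>_. bernoulli_pmf p)))"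
    unfolding rs_def using assms
    by (subst Pi_pmf_union) (auto simp: map_pmf_comp case_prod_unfold)
  also have "\<dots> = map_pmf (\<lambda>(f,g). {e \<in> X. f e} \<union> {e \<in> Y. g e})
          (pair_pmf (Pi_pmf X False (\<lambda>_. bernoulli_pmf p)) (Pi_pmf Y False (\<lambda>_. bernoulli_pmf p)))"
    using assms(3) by (intro map_pmf_cong refl) auto
  also have "\<dots> = map_pmf (\<lambda>(A,B). A \<union> B) (pair_pmf (rs X p) (rs Y p))"
    unfolding rs_def map_pair[symmetric] map_pmf_comp by (simp add: case_prod_unfold)
  finally show ?thesis .
qed

lemma rs_split_prob:
  assumes "finite S"
  shows "measure_pmf.prob (rs S p) {R. \<phi> (R \<inter> X) \<and> \<psi> (R - X)} =
         measure_pmf.prob (rs (S \<inter> X) p) {A. \<phi> A} * measure_pmf.prob (rs (S - X) p) {B. \<psi> B}"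
proof -
  let ?M = "pair_pmf (rs (S \<inter> X) p) (rs (S - X) p)"
  have S: "S = (S \<inter> X) \<union> (S - X)" by auto
  have "rs S p = map_pmf (\<lambda>(A,B). A \<union> B) ?M"
    using assms by (subst S, subst rs_union) auto
  hence "measure_pmf.prob (rs S p) {R. \<phi> (R \<inter> X) \<and> \<psi> (R - X)} =
         measure_pmf.prob ?M ((\<lambda>(A,B). A \<union> B) -` {R. \<phi> (R \<inter> X) \<and> \<psi> (R - X)})"
    by simp
  also have "\<dots> = measure_pmf.prob ?M (((\<lambda>(A,B). A \<union> B) -` {R. \<phi> (R \<inter> X) \<and> \<psi> (R - X)}) \<inter> set_pmf ?M)"
    by (simp only: measure_Int_set_pmf)
  also have "((\<lambda>(A,B). A \<union> B) -` {R. \<phi> (R \<inter> X) \<and> \<psi> (R - X)}) \<inter> set_pmf ?M =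
       ({A. \<phi> A} \<inter> set_pmf (rs (S \<inter> X) p)) \<times> ({B. \<psi> B} \<inter> set_pmf (rs (S - X) p))"
  proof -
    have *: "(A \<union> B) \<inter> X = A" "(A \<union> B) - X = B"
      if "A \<in> set_pmf (rs (S \<inter> X) p)" "B \<in> set_pmf (rs (S - X) p)" for A B
      using set_rs[OF that(1)] set_rs[OF that(2)] by auto
    show ?thesis using * by auto
  qed
  also have "measure_pmf.prob ?M \<dots> = measure_pmf.prob (rs (S \<inter> X) p) ({A. \<phi> A} \<inter> set_pmf (rs (S \<inter> X) p))
        * measure_pmf.prob (rs (S - X) p) ({B. \<psi> B} \<inter> set_pmf (rs (S - X) p))"
    by (rule measure_pmf_prob_product) (auto intro: countable_subset)
  also have "\<dots> = measure_pmf.prob (rs (S \<inter> X) p) {A. \<phi> A} * measure_pmf.prob (rs (S - X) p) {B. \<psi> B}"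
    by (simp add: measure_Int_set_pmf)
  finally show ?thesis .
qed

lemma rs_indep:
  assumes "finite S"
  shows "measure_pmf.prob (rs S p) {R. \<phi> (R \<inter> X) \<and> \<psi> (R - X)} =
         measure_pmf.prob (rs S p) {R. \<phi> (R \<inter> X)} * measure_pmf.prob (rs S p) {R. \<psi> (R - X)}"
proof -
  have a: "measure_pmf.prob (rs S p) {R. \<phi> (R \<inter> X)} = measure_pmf.prob (rs (S \<inter> X) p) {A. \<phi> A}"
    using rs_split_prob[OF assms, where \<phi>=\<phi> and X=X and \<psi>="\<lambda>_. True"] by simp
  have b: "measure_pmf.prob (rs S p) {R. \<psi> (R - X)} = measure_pmf.prob (rs (S - X) p) {A. \<psi> A}"
    using rs_split_prob[OF assms, where \<phi>="\<lambda>_. True" and X=X and \<psi>=\<psi>] by simp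
  show ?thesis using rs_split_prob[OF assms] a b by simp
qed

lemma rs_empty_prob:
  assumes "finite S" "F \<subseteq> S" "0 \<le> p" "p \<le> 1"
  shows "measure_pmf.prob (rs S p) {R. R \<inter> F = {}} = (1 - p) ^ card F"
proof -
  have "measure_pmf.prob (rs S p) {R. R \<inter> F = {}} =
        measure_pmf.prob (Pi_pmf S False (\<lambda>_. bernoulli_pmf p)) {f. {e \<in> S. f e} \<inter> F = {}}"
    by (simp add: rs_def)
  also have "{f. {e \<in> S. f e} \<inter> F = {}} = Pi S (\<lambda>e. if e \<in> F then {False} else UNIV)"
    using assms(2) by (auto simp: Pi_def)
  also have "measure_pmf.prob (Pi_pmf S False (\<lambda>_. bernoulli_pmf p)) \<dots> =
      (\<Prod>e\<in>S. measure_pmf.prob (bernoulli_pmf p) (if e \<in> F then {False} else UNIV))"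
    using assms(1) by (rule measure_Pi_pmf_Pi)
  also have "\<dots> = (\<Prod>e\<in>S. if e \<in> F then 1 - p else 1)"
    using assms(3,4) by (intro prod.cong refl) (auto simp: measure_pmf_single)
  also have "\<dots> = (1 - p) ^ card F"
    using assms(1,2) by (subst prod.If_cases) (auto simp: Int_absorb1 Int_absorb2 intro!: prod.neutral)
  finally show ?thesis .
qed

lemma rs_nonempty_prob:
  assumes "finite S" "F \<subseteq> S" "0 \<le> p" "p \<le> 1"
  shows "measure_pmf.prob (rs S p) {R. R \<inter> F \<noteq> {}} = 1 - (1 - p) ^ card F"
proof -
  have "{R. R \<inter> F \<noteq> {}} = UNIV - {R. R \<inter> F = {}}" by auto
  thus ?thesis using rs_empty_prob[OF assms] measure_pmf.prob_compl[of "{R. R \<inter> F = {}}" "rs S p"] by simp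
qed

lemma rs_chernoff:
  fixes F :: "'a \<Rightarrow> nat set set" and w :: "'a \<Rightarrow> real"
  assumes "finite S" "finite Os" "\<And>Q. Q \<in> Os \<Longrightarrow> F Q \<subseteq> S"
    "\<And>Q Q'. Q \<in> Os \<Longrightarrow> Q' \<in> Os \<Longrightarrow> Q \<noteq> Q' \<Longrightarrow> F Q \<inter> F Q' = {}"
    "0 \<le> p" "p \<le> 1" "t \<ge> 0" "\<And>Q. Q \<in> Os \<Longrightarrow> w Q \<ge> 0"
  shows "measure_pmf.prob (rs S p) {R. (\<Sum>Q\<in>Os. if R \<inter> F Q \<noteq> {} then w Q else 0) < \<theta>}
     \<le> exp (t * \<theta>) * (\<Prod>Q\<in>Os. 1 - (1 - (1 - p) ^ card (F Q)) * (1 - exp (- t * w Q)))"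
  using assms(2,3,4,8)
proof (induction Os arbitrary: \<theta> rule: finite_induct)
  case empty
  show ?case
  proof (cases "\<theta> > 0")
    case True
    have "exp (t * \<theta>) \<ge> 1" using True assms(7) by simp
    thus ?thesis by (simp add: True)
  next
    case False
    thus ?thesis by simp
  qed
next
  case (insert Q0 Os)
  define X where "X = F Q0"
  define Z where "Z = (\<lambda>R. \<Sum>Q\<in>Os. if R \<inter> F Q \<noteq> {} then w Q else 0)"
  define PP where "PP = (\<Prod>Q\<in>Os. 1 - (1 - (1 - p) ^ card (F Q)) * (1 - exp (- t * w Q)))"
  define q where "q = 1 - (1 - p) ^ card X"
  have Zs: "Z (R - X) = Z R" for R
    unfolding Z_def
  proof (intro sum.cong refl)
    fix Q assume "Q \<in> Os"
    hence "F Q \<inter> X = {}" using insert.prems(2)[of Q Q0] insert.hyps unfolding X_def by auto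
    hence "(R - X) \<inter> F Q = R \<inter> F Q" by auto
    thus "(if (R - X) \<inter> F Q \<noteq> {} then w Q else 0) = (if R \<inter> F Q \<noteq> {} then w Q else 0)" by simp
  qed
  have IH: "measure_pmf.prob (rs S p) {R. Z R < \<theta>'} \<le> exp (t * \<theta>') * PP" for \<theta>'
    unfolding Z_def PP_def using insert.prems by (intro insert.IH) auto
  have Pi0: "PP \<ge> 0"
    unfolding PP_def
  proof (intro prod_nonneg)
    fix Q assume Q: "Q \<in> Os"
    have a: "0 \<le> (1 - p) ^ card (F Q)" "(1 - p) ^ card (F Q) \<le> 1" using assms(5,6)
      by (auto intro: power_le_one)
    have b: "0 \<le> 1 - exp (- t * w Q)" "1 - exp (- t * w Q) \<le> 1"
      using assms(7) insert.prems(3)[of Q] Q by auto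
    have "(1 - (1 - p) ^ card (F Q)) * (1 - exp (- t * w Q)) \<le> 1 * 1"
      using a b by (intro mult_mono) auto
    thus "0 \<le> 1 - (1 - (1 - p) ^ card (F Q)) * (1 - exp (- t * w Q))" by simp
  qed
  have q01: "0 \<le> q" "q \<le> 1" unfolding q_def using assms(5,6)
    by (auto intro: power_le_one)
  have XS: "X \<subseteq> S" unfolding X_def using insert.prems(1) by auto
  have ev: "{R. (\<Sum>Q\<in>insert Q0 Os. if R \<inter> F Q \<noteq> {} then w Q else 0) < \<theta>} =
        {R. R \<inter> X \<noteq> {} \<and> Z (R - X) < \<theta> - w Q0} \<union> {R. R \<inter> X = {} \<and> Z (R - X) < \<theta>}"
    using insert.hyps unfolding Zs by (auto simp: X_def Z_def)
  have p1: "measure_pmf.prob (rs S p) {R. R \<inter> X \<noteq> {} \<and> Z (R - X) < \<theta> - w Q0} = q * measure_pmf.prob (rs S p) {R. Z R < \<theta> - w Q0}"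
    using rs_indep[OF assms(1), where \<phi> = "\<lambda>A. A \<noteq> {}" and X = X and \<psi> = "\<lambda>B. Z B < \<theta> - w Q0"]
      rs_nonempty_prob[OF assms(1) XS assms(5,6)] unfolding Zs q_def by simp
  have p2: "measure_pmf.prob (rs S p) {R. R \<inter> X = {} \<and> Z (R - X) < \<theta>} = (1 - q) * measure_pmf.prob (rs S p) {R. Z R < \<theta>}"
    using rs_indep[OF assms(1), where \<phi> = "\<lambda>A. A = {}" and X = X and \<psi> = "\<lambda>B. Z B < \<theta>"]
      rs_empty_prob[OF assms(1) XS assms(5,6)] unfolding Zs q_def by simp
  have "measure_pmf.prob (rs S p) {R. (\<Sum>Q\<in>insert Q0 Os. if R \<inter> F Q \<noteq> {} then w Q else 0) < \<theta>}
      = q * measure_pmf.prob (rs S p) {R. Z R < \<theta> - w Q0} + (1 - q) * measure_pmf.prob (rs S p) {R. Z R < \<theta>}"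
    unfolding ev p1[symmetric] p2[symmetric]
    by (rule measure_pmf.finite_measure_Union) auto
  also have "\<dots> \<le> q * (exp (t * (\<theta> - w Q0)) * PP) + (1 - q) * (exp (t * \<theta>) * PP)"
    using IH q01 by (intro add_mono mult_left_mono) auto
  also have "\<dots> = exp (t * \<theta>) * (PP * (1 - q * (1 - exp (- t * w Q0))))"
    by (simp add: algebra_simps exp_diff exp_minus field_simps)
  also have "PP * (1 - q * (1 - exp (- t * w Q0))) =
     (\<Prod>Q\<in>insert Q0 Os. 1 - (1 - (1 - p) ^ card (F Q)) * (1 - exp (- t * w Q)))"
    using insert.hyps by (simp add: PP_def q_def X_def mult.commute)
  finally show ?case .
qed

lemma exp_conv: fixes z y :: real assumes "0 \<le> z" "z \<le> 1" "0 \<le> y"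
  shows "z * (1 - exp (- y)) \<le> 1 - exp (- y * z)"
proof -
  have "exp ((1 - z) *\<^sub>R 0 + z *\<^sub>R (- y)) \<le> (1 - z) * exp 0 + z * exp (- y)"
    using assms by (intro convex_onD[OF exp_convex]) auto
  thus ?thesis by (simp add: algebra_simps)
qed

lemma exp_small1: fixes s :: real assumes "0 \<le> s" "s \<le> 1/2" shows "3/4 * s \<le> 1 - exp (- s)"
proof -
  have e: "1 + s + s^2/2 \<le> exp s" using assms exp_lower_Taylor_quadratic by simp
  have pos: "0 < 1 + s + s^2/2" using assms by (simp add: add_pos_nonneg)
  have "(1 + s + s^2/2) * (1 - 3/4 * s) \<ge> 1"
  proof -
    have h1: "s * s \<le> s * (1/2)" using assms by (intro mult_left_mono) auto
    have h2: "s * s * s \<le> s * s * (1/2)" using assms by (intro mult_left_mono) auto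
    have "(1 + s + s^2/2) * (1 - 3/4 * s) = 1 + s / 4 - (s * s) / 4 - 3 / 8 * (s * s * s)"
      by (simp add: algebra_simps power2_eq_square)
    thus ?thesis using h1 h2 assms by linarith
  qed
  hence "1 / (1 + s + s^2/2) \<le> 1 - 3/4 * s" using pos by (simp add: field_simps)
  moreover have "exp (- s) \<le> 1 / (1 + s + s^2/2)" using e pos by (simp add: exp_minus field_simps)
  ultimately show ?thesis by linarith
qed

lemma exp_small2: fixes y :: real assumes "0 \<le> y" "y \<le> 1" shows "y / 2 \<le> 1 - exp (- y)"
proof -
  have e: "1 + y \<le> exp y" by (rule exp_ge_add_one_self)
  have "(1 + y) * (1 - y/2) \<ge> 1"
  proof -
    have "y * y \<le> y * 1" using assms by (intro mult_left_mono) auto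
    thus ?thesis by (simp add: algebra_simps)
  qed
  hence "1 / (1 + y) \<le> 1 - y/2" using assms by (simp add: field_simps)
  moreover have "exp (- y) \<le> 1 / (1 + y)" using e assms by (simp add: exp_minus field_simps)
  ultimately show ?thesis by linarith
qed

lemma exp_minus_one_half: "exp (-1::real) \<le> 1/2"
proof -
  have "2 \<le> exp (1::real)" using exp_ge_add_one_self[of 1] by simp
  thus ?thesis by (simp add: exp_minus field_simps)
qed

lemma one_minus_le_exp: "1 - x \<le> exp (- x::real)"
  using exp_ge_add_one_self[of "-x"] by simp

lemma step_prob:
  fixes n a :: nat and \<epsilon> :: real and L :: "nat set" and Os :: "nat set set"
  assumes n: "n > 0" and a: "a > 0" and eps: "\<epsilon> > 0" "\<epsilon> * a \<ge> 64" "\<epsilon> \<le> n"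
    and L: "L \<subseteq> {1..n}" and Os: "\<Union>Os \<subseteq> {1..n}" and disj: "L \<inter> \<Union>Os = {}"
    and sz: "\<forall>Q\<in>Os. card Q \<le> a" and pd: "\<forall>Q\<in>Os. \<forall>Q'\<in>Os. Q \<noteq> Q' \<longrightarrow> Q \<inter> Q' = {}"
    and big: "real n / 2 \<le> real (card (\<Union>Os))" and cnt: "real (card Os) \<le> 2 * real n / real a"
  shows "measure_pmf.prob (gnp n (\<epsilon> / n))
     {R. real (card (\<Union>{Q\<in>Os. \<exists>x\<in>L. \<exists>y\<in>Q. {x,y} \<in> R})) < min (2 * real (card L)) (real n / 128)}
     \<le> exp (- min (\<epsilon> * card L / 128) (real n / (64 * a)))"
proof -
  define p where "p = \<epsilon> / n"
  define w where "w = card L"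
  define t where "t = 1 / (2 * real a)"
  define \<theta> where "\<theta> = min (2 * real w) (real n / 128)"
  define F where "F = (\<lambda>Q. (\<lambda>(x,y). {x,y::nat}) ` (L \<times> Q))"
  define y where "y = p * w * a"
  have p01: "0 \<le> p" "p \<le> 1" using eps n by (auto simp: p_def field_simps)
  have pn: "p * n = \<epsilon>" using n by (simp add: p_def)
  have finL: "finite L" using L finite_subset by blast
  have finU: "finite (\<Union>Os)" using Os finite_subset by blast
  have finOs: "finite Os" using finU by (rule finite_UnionD)
  have finQ: "finite Q" if "Q \<in> Os" for Q using finU that by (meson Union_upper finite_subset)
  have QL: "Q \<inter> L = {}" if "Q \<in> Os" for Q using disj that by auto
  have FS: "F Q \<subseteq> all_edges n" if "Q \<in> Os" for Q
    using that L Os QL unfolding F_def all_edges_def by fastforce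
  have inj: "inj_on (\<lambda>(x,y). {x,y::nat}) (L \<times> Q)" if "Q \<in> Os" for Q
    using QL[OF that] unfolding inj_on_def by (auto simp: doubleton_eq_iff)
  have cardF: "card (F Q) = w * card Q" if "Q \<in> Os" for Q
    unfolding F_def w_def using card_image[OF inj[OF that]] finL finQ[OF that]
    by (simp add: card_cartesian_product)
  have Fdisj: "F Q \<inter> F Q' = {}" if "Q \<in> Os" "Q' \<in> Os" "Q \<noteq> Q'" for Q Q'
  proof -
    have "Q \<inter> Q' = {}" using pd that by auto
    thus ?thesis using QL[OF that(1)] QL[OF that(2)] unfolding F_def
      by (auto simp: doubleton_eq_iff)
  qed
  have hit: "(\<exists>x\<in>L. \<exists>y\<in>Q. {x,y} \<in> R) \<longleftrightarrow> R \<inter> F Q \<noteq> {}" for Q R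
    unfolding F_def by auto
  have cardU: "real (card (\<Union>{Q\<in>Os. \<exists>x\<in>L. \<exists>y\<in>Q. {x,y} \<in> R})) =
        (\<Sum>Q\<in>Os. if R \<inter> F Q \<noteq> {} then real (card Q) else 0)" for R
  proof -
    have "card (\<Union>{Q\<in>Os. \<exists>x\<in>L. \<exists>y\<in>Q. {x,y} \<in> R}) = sum card {Q\<in>Os. \<exists>x\<in>L. \<exists>y\<in>Q. {x,y} \<in> R}"
      by (rule card_Union_disjoint) (use pd finQ in \<open>auto simp: pairwise_def disjnt_def\<close>)
    also have "\<dots> = (\<Sum>Q\<in>Os. if R \<inter> F Q \<noteq> {} then card Q else 0)"
      using finOs by (simp add: sum.inter_filter hit)
    finally show ?thesis by (simp add: of_nat_sum if_distrib cong: if_cong)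
  qed
  have "measure_pmf.prob (gnp n (\<epsilon> / n))
     {R. real (card (\<Union>{Q\<in>Os. \<exists>x\<in>L. \<exists>y\<in>Q. {x,y} \<in> R})) < \<theta>} =
     measure_pmf.prob (rs (all_edges n) p) {R. (\<Sum>Q\<in>Os. if R \<inter> F Q \<noteq> {} then real (card Q) else 0) < \<theta>}"
    unfolding cardU gnp_rs p_def ..
  also have "\<dots> \<le> exp (t * \<theta>) * (\<Prod>Q\<in>Os. 1 - (1 - (1 - p) ^ card (F Q)) * (1 - exp (- t * real (card Q))))"
    by (rule rs_chernoff) (use finite_all_edges finOs FS Fdisj p01 in \<open>auto simp: t_def\<close>)
  also have "\<dots> \<le> exp (t * \<theta>) * exp (- (3 * (1 - exp (- y)) * n / (64 * a)))"
  proof (rule mult_left_mono[OF _ exp_ge_zero])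
    define x where "x = (\<lambda>Q. (1 - (1 - p) ^ card (F Q)) * (1 - exp (- t * real (card Q))))"
    have x_lb: "x Q \<ge> (1 - exp (- y)) * (3 / (8 * a^2)) * (real (card Q))^2" if Q: "Q \<in> Os" for Q
    proof -
      have cQa: "real (card Q) \<le> a" using sz Q by auto
      have y0: "y \<ge> 0" using p01 by (simp add: y_def)
      have "(1 - p) ^ card (F Q) \<le> exp (- p) ^ card (F Q)"
        using p01 one_minus_le_exp[of p] by (intro power_mono) auto
      also have "\<dots> = exp (- y * (real (card Q) / a))"
        using a by (simp add: cardF[OF Q] exp_of_nat_mult[symmetric] y_def field_simps)
      finally have q1: "1 - exp (- y * (real (card Q) / a)) \<le> 1 - (1 - p) ^ card (F Q)" by simp
      have q2: "real (card Q) / a * (1 - exp (- y)) \<le> 1 - exp (- y * (real (card Q) / a))"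
        using cQa a y0 by (intro exp_conv) auto
      have e2: "3/4 * (t * card Q) \<le> 1 - exp (- (t * card Q))"
        using cQa a by (intro exp_small1) (auto simp: t_def field_simps)
      have nn1: "0 \<le> real (card Q) / a * (1 - exp (- y))" using y0 by auto
      have "(real (card Q) / a * (1 - exp (- y))) * (3/4 * (t * card Q)) \<le> x Q"
        unfolding x_def using q1 q2 e2 nn1 by (intro mult_mono) (auto simp: t_def)
      moreover have "(real (card Q) / a * (1 - exp (- y))) * (3/4 * (t * card Q)) =
           (1 - exp (- y)) * (3 / (8 * a^2)) * (real (card Q))^2"
        using a by (simp add: t_def field_simps power2_eq_square)
      ultimately show ?thesis by simp
    qed
    have sq: "(\<Sum>Q\<in>Os. real (card Q))^2 \<le> (\<Sum>Q\<in>Os. (real (card Q))^2) * real (card Os)"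
      by (rule sum_squared_le_sum_of_squares)
    have sumQ: "(\<Sum>Q\<in>Os. real (card Q)) = real (card (\<Union>Os))"
      using card_Union_disjoint[of Os] pd finQ by (auto simp: pairwise_def disjnt_def of_nat_sum)
    have cOs: "card Os > 0"
    proof (rule ccontr)
      assume "\<not> card Os > 0" hence "Os = {}" using finOs by auto
      thus False using big n by simp
    qed
    have sq2: "real n * a / 8 \<le> (\<Sum>Q\<in>Os. (real (card Q))^2)"
    proof -
      have "(real n / 2)^2 \<le> (\<Sum>Q\<in>Os. real (card Q))^2"
        using big n unfolding sumQ by (intro power_mono) auto
      also have "\<dots> \<le> (\<Sum>Q\<in>Os. (real (card Q))^2) * (2 * real n / real a)"
        using sq cnt by (meson order_trans mult_left_mono sum_nonneg zero_le_power2)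
      finally have "(real n / 2)^2 \<le> (\<Sum>Q\<in>Os. (real (card Q))^2) * (2 * real n / real a)" .
      hence "(real n)^2 * a \<le> (\<Sum>Q\<in>Os. (real (card Q))^2) * (8 * real n)"
        using a by (simp add: field_simps power2_eq_square)
      hence "real n * (real n * a) \<le> real n * ((\<Sum>Q\<in>Os. (real (card Q))^2) * 8)"
        by (simp add: power2_eq_square algebra_simps)
      hence "real n * a \<le> (\<Sum>Q\<in>Os. (real (card Q))^2) * 8"
        using n by (simp add: mult_le_cancel_left)
      thus ?thesis by simp
    qed
    have y0: "0 \<le> 1 - exp (- y)" using p01 by (simp add: y_def)
    have "3 * (1 - exp (- y)) * n / (64 * a) = (1 - exp (- y)) * (3 / (8 * a^2)) * (real n * a / 8)"
      using a by (simp add: field_simps power2_eq_square)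
    also have "\<dots> \<le> (1 - exp (- y)) * (3 / (8 * a^2)) * (\<Sum>Q\<in>Os. (real (card Q))^2)"
      using sq2 y0 by (intro mult_left_mono) auto
    also have "\<dots> = (\<Sum>Q\<in>Os. (1 - exp (- y)) * (3 / (8 * a^2)) * (real (card Q))^2)"
      by (simp add: sum_distrib_left)
    also have "\<dots> \<le> (\<Sum>Q\<in>Os. x Q)" using x_lb by (intro sum_mono) auto
    finally have sx: "3 * (1 - exp (- y)) * n / (64 * a) \<le> (\<Sum>Q\<in>Os. x Q)" .
    have "(\<Prod>Q\<in>Os. 1 - x Q) \<le> (\<Prod>Q\<in>Os. exp (- x Q))"
    proof (rule prod_mono)
      fix Q assume Q: "Q \<in> Os"
      have a1: "0 \<le> (1 - p) ^ card (F Q)" "(1 - p) ^ card (F Q) \<le> 1" using p01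
        by (auto intro: power_le_one)
      have b1: "0 \<le> 1 - exp (- t * real (card Q))" "1 - exp (- t * real (card Q)) \<le> 1"
        using a by (auto simp: t_def)
      have "x Q \<le> 1 * 1" unfolding x_def using a1 b1 by (intro mult_mono) auto
      thus "0 \<le> 1 - x Q \<and> 1 - x Q \<le> exp (- x Q)" using one_minus_le_exp[of "x Q"] by simp
    qed
    also have "\<dots> = exp (- (\<Sum>Q\<in>Os. x Q))" by (simp only: sum_negf[symmetric] exp_sum[OF finOs])
    also have "\<dots> \<le> exp (- (3 * (1 - exp (- y)) * n / (64 * a)))" using sx by simp
    finally show "(\<Prod>Q\<in>Os. 1 - (1 - (1 - p) ^ card (F Q)) * (1 - exp (- t * real (card Q))))
        \<le> exp (- (3 * (1 - exp (- y)) * n / (64 * a)))" by (simp add: x_def)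
  qed
  also have "\<dots> = exp (t * \<theta> - 3 * (1 - exp (- y)) * n / (64 * a))"
    by (simp add: exp_diff exp_minus field_simps)
  also have "\<dots> \<le> exp (- min (\<epsilon> * card L / 128) (real n / (64 * a)))"
  proof -
    have ainv: "1 / real a \<le> \<epsilon> / 64" using eps a by (simp add: field_simps)
    have "t * \<theta> - 3 * (1 - exp (- y)) * n / (64 * a) \<le> - min (\<epsilon> * w / 128) (real n / (64 * a))"
    proof (cases "y \<le> 1")
      case True
      have "y / 2 \<le> 1 - exp (- y)" using True p01 by (intro exp_small2) (auto simp: y_def)
      hence "3 * (y / 2) * n / (64 * a) \<le> 3 * (1 - exp (- y)) * n / (64 * a)"
        using a by (intro divide_right_mono mult_right_mono) auto
      moreover have "3 * (y / 2) * n / (64 * a) = 3 * \<epsilon> * w / 128"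
        using a pn by (simp add: y_def field_simps)
      moreover have "t * \<theta> \<le> \<epsilon> * w / 64"
      proof -
        have "t * \<theta> \<le> t * (2 * w)" unfolding \<theta>_def using a by (intro mult_left_mono) (auto simp: t_def)
        also have "\<dots> = w * (1 / real a)" by (simp add: t_def)
        also have "\<dots> \<le> w * (\<epsilon> / 64)" using ainv by (intro mult_left_mono) auto
        finally show ?thesis by (simp add: mult.commute)
      qed
      moreover have "min (\<epsilon> * w / 128) (real n / (64 * a)) \<le> \<epsilon> * w / 128" by simp
      ultimately show ?thesis by linarith
    next
      case False
      have "exp (- y) \<le> exp (-1)" using False by simp
      hence "1/2 \<le> 1 - exp (- y)" using exp_minus_one_half by linarith
      hence "3 * (1/2) * n / (64 * a) \<le> 3 * (1 - exp (- y)) * n / (64 * a)"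
        using a by (intro divide_right_mono mult_right_mono) auto
      moreover have "t * \<theta> \<le> n / (256 * a)"
      proof -
        have "t * \<theta> \<le> t * (n / 128)" unfolding \<theta>_def using a by (intro mult_left_mono) (auto simp: t_def)
        thus ?thesis by (simp add: t_def)
      qed
      moreover have "min (\<epsilon> * w / 128) (real n / (64 * a)) \<le> real n / (64 * a)" by simp
      moreover have "3 * (1/2) * n / (64 * a) = 6 * (n / (256 * a))" "real n / (64 * a) = 4 * (n / (256 * a))"
        by (simp_all add: field_simps)
      moreover have "0 \<le> n / (256 * a)" by simp
      ultimately show ?thesis by linarith
    qed
    thus ?thesis by (simp add: w_def)
  qed
  finally show ?thesis by (simp add: \<theta>_def w_def)
qed

definition reach :: "nat set set \<Rightarrow> nat \<Rightarrow> nat \<Rightarrow> nat \<Rightarrow> bool" where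
  "reach E u v d \<longleftrightarrow> (\<exists>xs. is_walk E xs \<and> hd xs = u \<and> last xs = v \<and> length xs \<le> Suc d)"

lemma is_walk_Cons: "is_walk E (x # xs) \<longleftrightarrow> (xs = [] \<or> ({x, hd xs} \<in> E \<and> is_walk E xs))"
proof
  assume w: "is_walk E (x # xs)"
  show "xs = [] \<or> ({x, hd xs} \<in> E \<and> is_walk E xs)"
  proof (cases xs)
    case Nil thus ?thesis by simp
  next
    case (Cons y ys)
    have "{x, hd xs} \<in> E" using w Cons unfolding is_walk_def by (auto dest: spec[of _ 0])
    moreover have "is_walk E xs"
      unfolding is_walk_def
    proof (intro conjI allI impI)
      show "xs \<noteq> []" using Cons by simp
      fix i assume "Suc i < length xs"
      thus "{xs ! i, xs ! Suc i} \<in> E" using w unfolding is_walk_def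
        by (auto dest: spec[of _ "Suc i"])
    qed
    ultimately show ?thesis by simp
  qed
next
  assume h: "xs = [] \<or> ({x, hd xs} \<in> E \<and> is_walk E xs)"
  show "is_walk E (x # xs)"
  proof (cases xs)
    case Nil thus ?thesis by (simp add: is_walk_def)
  next
    case (Cons y ys)
    have e: "{x, y} \<in> E" and w: "is_walk E xs" using h Cons by auto
    show ?thesis unfolding is_walk_def
    proof (intro conjI allI impI)
      fix i assume i: "Suc i < length (x # xs)"
      show "{(x # xs) ! i, (x # xs) ! Suc i} \<in> E"
      proof (cases i)
        case 0 thus ?thesis using e Cons by simp
      next
        case (Suc j) thus ?thesis using w i unfolding is_walk_def by simp
      qed
    qed simp
  qed
qed

lemma is_walk_append:
  assumes "is_walk E xs" "is_walk E ys" "last xs = hd ys"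
  shows "is_walk E (xs @ tl ys)"
  using assms
proof (induction xs)
  case Nil thus ?case by (simp add: is_walk_def)
next
  case (Cons x xs)
  show ?case
  proof (cases "xs = []")
    case True
    thus ?thesis using Cons.prems by (cases ys) (auto simp: is_walk_Cons)
  next
    case False
    then obtain y zs where Cons2: "xs = y # zs" by (cases xs) auto
    have "is_walk E xs" "{x, hd xs} \<in> E" using Cons.prems(1) Cons2 by (auto simp: is_walk_Cons)
    moreover have "last xs = hd ys" using Cons.prems(3) Cons2 by simp
    ultimately have "is_walk E (xs @ tl ys)" using Cons.IH Cons.prems(2) by simp
    thus ?thesis using \<open>{x, hd xs} \<in> E\<close> Cons2 by (simp add: is_walk_Cons)
  qed
qed

lemma is_walk_single: "is_walk E [u]" by (simp add: is_walk_def)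

lemma is_walk_mono: "is_walk E xs \<Longrightarrow> E \<subseteq> E' \<Longrightarrow> is_walk E' xs"
  unfolding is_walk_def by blast

lemma is_walk_rev: "is_walk E xs \<Longrightarrow> is_walk E (rev xs)"
proof (induction xs)
  case Nil thus ?case by (simp add: is_walk_def)
next
  case (Cons x xs)
  show ?case
  proof (cases "xs = []")
    case True thus ?thesis by (simp add: is_walk_def)
  next
    case False
    then obtain y ys where xy: "xs = y # ys" by (cases xs) auto
    have w: "is_walk E xs" and e: "{x, y} \<in> E" using Cons.prems xy by (auto simp: is_walk_Cons)
    have e': "{y, x} \<in> E" using e by (simp add: insert_commute)
    have w2: "is_walk E [y, x]" using e' by (simp add: is_walk_Cons is_walk_def)
    have "last (rev xs) = hd [y, x]" using xy by simp
    hence "is_walk E (rev xs @ tl [y, x])"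
      using Cons.IH[OF w] w2 by (intro is_walk_append) auto
    thus ?thesis using xy by simp
  qed
qed

lemma is_walk_take: "is_walk E xs \<Longrightarrow> 0 < k \<Longrightarrow> is_walk E (take k xs)"
  unfolding is_walk_def by auto

lemma is_walk_drop: assumes "is_walk E xs" "k < length xs" shows "is_walk E (drop k xs)"
  unfolding is_walk_def
proof (intro conjI allI impI)
  show "drop k xs \<noteq> []" using assms(2) by simp
  fix i assume i: "Suc i < length (drop k xs)"
  hence "Suc (k + i) < length xs" by simp
  hence "{xs ! (k + i), xs ! Suc (k + i)} \<in> E" using assms(1) unfolding is_walk_def by blast
  thus "{drop k xs ! i, drop k xs ! Suc i} \<in> E" using assms(2) i by simp
qed

lemma reach_refl: "reach E u u d"
  unfolding reach_def by (rule exI[of _ "[u]"]) (simp add: is_walk_def)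

lemma reach_edge: "{u, v} \<in> E \<Longrightarrow> reach E u v 1"
  unfolding reach_def by (rule exI[of _ "[u, v]"]) (simp add: is_walk_Cons is_walk_def)

lemma reach_mono: assumes "reach E u v d" "d \<le> d'" "E \<subseteq> E'" shows "reach E' u v d'"
proof -
  obtain xs where xs: "is_walk E xs" "hd xs = u" "last xs = v" "length xs \<le> Suc d"
    using assms(1) unfolding reach_def by blast
  have "is_walk E' xs" using xs(1) assms(3) by (rule is_walk_mono)
  moreover have "length xs \<le> Suc d'" using xs(4) assms(2) by simp
  ultimately show ?thesis using xs unfolding reach_def by blast
qed

lemma reach_trans:
  assumes "reach E u v d1" "reach E v w d2" shows "reach E u w (d1 + d2)"
proof -
  obtain xs where xs: "is_walk E xs" "hd xs = u" "last xs = v" "length xs \<le> Suc d1"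
    using assms(1) unfolding reach_def by blast
  obtain ys where ys: "is_walk E ys" "hd ys = v" "last ys = w" "length ys \<le> Suc d2"
    using assms(2) unfolding reach_def by blast
  have ne: "xs \<noteq> []" "ys \<noteq> []" using xs ys unfolding is_walk_def by auto
  have "is_walk E (xs @ tl ys)" using xs ys by (intro is_walk_append) auto
  moreover have "hd (xs @ tl ys) = u" using xs ne by simp
  moreover have "last (xs @ tl ys) = w"
  proof (cases "tl ys = []")
    case True
    hence "ys = [hd ys]" using ne by (cases ys) auto
    hence "w = v" using ys by (metis last_ConsL)
    thus ?thesis using True xs by simp
  next
    case False
    have "last (tl ys) = last ys" using False ne by (cases ys) auto
    thus ?thesis using ys False by (simp add: last_append)
  qed
  moreover have "length (xs @ tl ys) \<le> Suc (d1 + d2)" using xs ys ne by simp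
  ultimately show ?thesis unfolding reach_def by blast
qed

lemma reach_sym: assumes "reach E u v d" shows "reach E v u d"
proof -
  obtain xs where xs: "is_walk E xs" "hd xs = u" "last xs = v" "length xs \<le> Suc d"
    using assms(1) unfolding reach_def by blast
  have "is_walk E (rev xs)" using xs(1) by (rule is_walk_rev)
  moreover have "hd (rev xs) = v" "last (rev xs) = u" using xs by (simp_all add: hd_rev last_rev)
  ultimately show ?thesis using xs(4) unfolding reach_def by (intro exI[of _ "rev xs"]) simp
qed

lemma reach_trans': assumes "reach E u v d1" "reach E v w d2" "d1 + d2 \<le> d" shows "reach E u w d"
proof -
  have "reach E u w (d1 + d2)" by (rule reach_trans[OF assms(1,2)])
  thus ?thesis by (rule reach_mono[OF _ assms(3) order_refl])
qed

lemma all_edges_mem: "{a, b} \<in> all_edges n \<Longrightarrow> a \<in> {1..n} \<and> b \<in> {1..n}"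
  unfolding all_edges_def by (auto simp: doubleton_eq_iff)

lemma walk_in_range:
  assumes "E \<subseteq> all_edges n" "is_walk E xs" "hd xs \<in> {1..n}" "i < length xs"
  shows "xs ! i \<in> {1..n}"
proof (cases i)
  case 0 thus ?thesis using assms by (simp add: hd_conv_nth is_walk_def)
next
  case (Suc j)
  have "{xs ! j, xs ! Suc j} \<in> E" using assms Suc unfolding is_walk_def by auto
  thus ?thesis using assms(1) all_edges_mem Suc by blast
qed

lemma reach_in_range:
  assumes "E \<subseteq> all_edges n" "reach E u v d" "u \<in> {1..n}"
  shows "v \<in> {1..n}"
proof -
  obtain xs where xs: "is_walk E xs" "hd xs = u" "last xs = v"
    using assms unfolding reach_def by blast
  have "xs \<noteq> []" using xs unfolding is_walk_def by auto
  hence "v = xs ! (length xs - 1)" "length xs - 1 < length xs" using xs(3) by (auto simp: last_conv_nth)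
  thus ?thesis using walk_in_range[OF assms(1) xs(1)] xs(2) assms(3) by metis
qed

lemma diam_le:
  assumes "\<forall>u\<in>{1..n}. \<forall>v\<in>{1..n}. reach E u v D"
  shows "\<exists>k. graph_diam n E = enat k \<and> k \<le> D"
proof -
  have d: "graph_dist E u v \<le> enat D" if uv: "u \<in> {1..n}" "v \<in> {1..n}" for u v
  proof -
    obtain xs where xs: "is_walk E xs" "hd xs = u" "last xs = v" "length xs \<le> Suc D"
      using assms uv unfolding reach_def by meson
    have "xs \<in> {xs. is_walk E xs \<and> hd xs = u \<and> last xs = v}" using xs by simp
    hence "graph_dist E u v \<le> enat (length xs - 1)"
      unfolding graph_dist_def by (rule INF_lower)
    also have "\<dots> \<le> enat D" using xs by simp
    finally show ?thesis .
  qed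
  have "(SUP v \<in> {1..n}. graph_dist E u v) \<le> enat D" if "u \<in> {1..n}" for u
    by (rule SUP_least) (rule d[OF that])
  hence "graph_diam n E \<le> enat D"
    unfolding graph_diam_def by (rule SUP_least)
  then obtain k where "graph_diam n E = enat k" "k \<le> D"
    by (cases "graph_diam n E") simp_all
  thus ?thesis by blast
qed

lemma last_take_Suc: "i < length xs \<Longrightarrow> last (take (Suc i) xs) = xs ! i"
  by (metis take_hd_drop hd_drop_conv_nth last_snoc)

lemma ball_card:
  assumes gr: "G \<subseteq> all_edges n" and con: "graph_connected n G" and u: "u \<in> {1..n}"
  shows "min n (Suc r) \<le> card {v \<in> {1..n}. reach G u v r}"
proof (cases "\<forall>v\<in>{1..n}. reach G u v r")
  case True
  hence "{v \<in> {1..n}. reach G u v r} = {1..n}" by auto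
  thus ?thesis by simp
next
  case False
  then obtain v where v: "v \<in> {1..n}" "\<not> reach G u v r" by blast
  have ex: "\<exists>m. reach G u v m"
  proof -
    obtain xs where xs: "is_walk G xs" "hd xs = u" "last xs = v"
      using con u v unfolding graph_connected_def by blast
    hence "reach G u v (length xs - 1)" unfolding reach_def by (intro exI[of _ xs]) auto
    thus ?thesis by blast
  qed
  define m where "m = (LEAST m. reach G u v m)"
  have rm: "reach G u v m" unfolding m_def using ex by (metis LeastI_ex)
  have mmin: "\<not> reach G u v j" if "j < m" for j using that not_less_Least unfolding m_def by blast
  have rm_lt: "r < m"
  proof (rule ccontr)
    assume "\<not> r < m"
    hence "reach G u v r" using reach_mono[OF rm _ order_refl, of r] by simp
    thus False using v by simp
  qed
  obtain xs where xs: "is_walk G xs" "hd xs = u" "last xs = v" "length xs \<le> Suc m"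
    using rm unfolding reach_def by blast
  have ne: "xs \<noteq> []" using xs unfolding is_walk_def by auto
  have len: "length xs = Suc m"
  proof (rule ccontr)
    assume "length xs \<noteq> Suc m"
    hence "length xs - 1 < m" using xs(4) ne by (cases xs) auto
    moreover have "reach G u v (length xs - 1)" unfolding reach_def using xs by (intro exI[of _ xs]) auto
    ultimately show False using mmin by blast
  qed
  have c1: "reach G u (xs ! i) i" if "i \<le> m" for i
  proof -
    have "i < length xs" using that len by simp
    hence "is_walk G (take (Suc i) xs)" "hd (take (Suc i) xs) = u" "last (take (Suc i) xs) = xs ! i"
      "length (take (Suc i) xs) \<le> Suc i"
      using xs ne by (auto intro: is_walk_take simp: last_take_Suc)
    thus ?thesis unfolding reach_def by blast
  qed
  have c2: "reach G (xs ! i) v (m - i)" if "i \<le> m" for i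
  proof -
    have i: "i < length xs" using that len by simp
    hence "is_walk G (drop i xs)" "hd (drop i xs) = xs ! i" "last (drop i xs) = v"
      "length (drop i xs) \<le> Suc (m - i)"
      using xs len that by (auto intro: is_walk_drop simp: hd_drop_conv_nth last_drop)
    thus ?thesis unfolding reach_def by blast
  qed
  have c3: "\<not> reach G u (xs ! i) j" if "i \<le> m" "j < i" for i j
  proof
    assume "reach G u (xs ! i) j"
    hence "reach G u v (j + (m - i))" using c2[OF that(1)] by (rule reach_trans)
    moreover have "j + (m - i) < m" using that by simp
    ultimately show False using mmin by blast
  qed
  have inj: "inj_on (\<lambda>i. xs ! i) {0..r}"
  proof (rule inj_onI)
    fix i j assume ij: "i \<in> {0..r}" "j \<in> {0..r}" "xs ! i = xs ! j"
    show "i = j"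
    proof (rule ccontr)
      assume "i \<noteq> j"
      hence "i < j \<or> j < i" by auto
      thus False
      proof
        assume "i < j" thus False using c3[of j i] c1[of i] ij rm_lt by auto
      next
        assume "j < i" thus False using c3[of i j] c1[of j] ij rm_lt by auto
      qed
    qed
  qed
  have sub: "(\<lambda>i. xs ! i) ` {0..r} \<subseteq> {v \<in> {1..n}. reach G u v r}"
  proof
    fix x assume "x \<in> (\<lambda>i. xs ! i) ` {0..r}"
    then obtain i where i: "i \<le> r" "x = xs ! i" by auto
    have "x \<in> {1..n}" using walk_in_range[OF gr xs(1)] xs(2) u i rm_lt len by auto
    moreover have "reach G u x r" using c1[of i] i rm_lt reach_mono[OF _ i(1) order_refl] by auto
    ultimately show "x \<in> {v \<in> {1..n}. reach G u v r}" by simp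
  qed
  have "Suc r = card ((\<lambda>i. xs ! i) ` {0..r})" using card_image[OF inj] by simp
  also have "\<dots> \<le> card {v \<in> {1..n}. reach G u v r}" by (rule card_mono[OF _ sub]) simp
  finally show ?thesis by simp
qed

lemma chunk:
  fixes A :: "'a set"
  assumes "finite A" "a > 0"
  shows "\<exists>C. finite C \<and> (\<forall>X\<in>C. X \<noteq> {} \<and> X \<subseteq> A \<and> card X \<le> a) \<and> \<Union>C = A \<and>
             (\<forall>X\<in>C. \<forall>Y\<in>C. X \<noteq> Y \<longrightarrow> X \<inter> Y = {}) \<and> card C * a \<le> card A + a"
  using assms(1)
proof (induction "card A" arbitrary: A rule: less_induct)
  case less
  show ?case
  proof (cases "card A \<le> a")
    case True
    show ?thesis
    proof (cases "A = {}")
      case True thus ?thesis by (intro exI[of _ "{}"]) auto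
    next
      case False
      thus ?thesis using \<open>card A \<le> a\<close> by (intro exI[of _ "{A}"]) auto
    qed
  next
    case False
    then obtain X where X: "X \<subseteq> A" "card X = a" "finite X"
      by (metis le_less_linear less_imp_le obtain_subset_with_card_n)
    have "card (A - X) < card A" using X assms(2) less.prems False
      by (simp add: card_Diff_subset)
    then obtain C where C: "finite C" "\<forall>Y\<in>C. Y \<noteq> {} \<and> Y \<subseteq> A - X \<and> card Y \<le> a"
      "\<Union>C = A - X" "\<forall>Y\<in>C. \<forall>Z\<in>C. Y \<noteq> Z \<longrightarrow> Y \<inter> Z = {}" "card C * a \<le> card (A - X) + a"
      using less.hyps[of "A - X"] less.prems by auto
    have Xne: "X \<noteq> {}" using X assms(2) by auto
    have XC: "X \<notin> C" using C(2) Xne by blast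
    have cd: "card (A - X) = card A - a" using X less.prems by (simp add: card_Diff_subset)
    show ?thesis
    proof (intro exI[of _ "insert X C"] conjI)
      show "card (insert X C) * a \<le> card A + a"
        using C(1,5) XC cd False by simp
      show "\<forall>Y\<in>insert X C. \<forall>Z\<in>insert X C. Y \<noteq> Z \<longrightarrow> Y \<inter> Z = {}"
        using C(2,4) by blast
    qed (use C X Xne in auto)
  qed
qed

lemma pieces:
  assumes gr: "G \<subseteq> all_edges n" and con: "graph_connected n G" and a: "a > 0" and na: "a < n"
  shows "\<exists>P. finite P \<and> \<Union>P = {1..n} \<and> (\<forall>Q\<in>P. \<forall>Q'\<in>P. Q \<noteq> Q' \<longrightarrow> Q \<inter> Q' = {}) \<and>
     (\<forall>Q\<in>P. card Q \<le> a \<and> (\<forall>x\<in>Q. \<forall>y\<in>Q. reach G x y (4 * a))) \<and> card P * a \<le> 2 * n"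
proof -
  define sep where "sep = (\<lambda>Z. Z \<subseteq> {1..n} \<and> (\<forall>z\<in>Z. \<forall>z'\<in>Z. z \<noteq> z' \<longrightarrow> \<not> reach G z z' (2 * a)))"
  have ex0: "\<exists>Z. sep Z \<and> card Z = 0" by (intro exI[of _ "{}"]) (simp add: sep_def)
  have bnd: "\<forall>y. (\<exists>Z. sep Z \<and> card Z = y) \<longrightarrow> y \<le> n"
    unfolding sep_def by (auto dest: card_mono[OF finite_atLeastAtMost])
  have "\<exists>k. (\<exists>Z. sep Z \<and> card Z = k) \<and> (\<forall>k'. (\<exists>Z. sep Z \<and> card Z = k') \<longrightarrow> k' \<le> k)"
    using Nat.ex_has_greatest_nat[of "\<lambda>k. \<exists>Z. sep Z \<and> card Z = k", OF ex0 bnd] .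
  then obtain Z where Z: "sep Z" and Zmax: "\<And>Z'. sep Z' \<Longrightarrow> card Z' \<le> card Z" by blast
  have Zn: "Z \<subseteq> {1..n}" and finZ: "finite Z" using Z unfolding sep_def by (auto intro: finite_subset)
  have cover: "\<exists>z\<in>Z. reach G z v (2 * a)" if v: "v \<in> {1..n}" for v
  proof (rule ccontr)
    assume h: "\<not> (\<exists>z\<in>Z. reach G z v (2 * a))"
    have vZ: "v \<notin> Z" using h reach_refl by blast
    have "sep (insert v Z)" using Z v h unfolding sep_def by (auto dest: reach_sym)
    hence "card (insert v Z) \<le> card Z" by (rule Zmax)
    thus False using vZ finZ by simp
  qed
  define ball where "ball = (\<lambda>z. {v \<in> {1..n}. reach G z v a})"
  have ball_disj: "ball z \<inter> ball z' = {}" if "z \<in> Z" "z' \<in> Z" "z \<noteq> z'" for z z'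
  proof (rule ccontr)
    assume "ball z \<inter> ball z' \<noteq> {}"
    then obtain x where "reach G z x a" "reach G z' x a" unfolding ball_def by auto
    hence "reach G z z' (a + a)" by (meson reach_sym reach_trans)
    hence "reach G z z' (2 * a)" by (simp add: mult_2)
    thus False using Z that unfolding sep_def by blast
  qed
  have ball_card': "a + 1 \<le> card (ball z)" if "z \<in> Z" for z
    using ball_card[OF gr con, of z a] that Zn na unfolding ball_def by auto
  have cardZ: "card Z * (a + 1) \<le> n"
  proof -
    have "card Z * (a + 1) = (\<Sum>z\<in>Z. a + 1)" by simp
    also have "\<dots> \<le> (\<Sum>z\<in>Z. card (ball z))" using ball_card' by (intro sum_mono) auto
    also have "\<dots> = card (\<Union>z\<in>Z. ball z)"
      by (rule card_UN_disjoint[symmetric]) (use finZ ball_disj in \<open>auto simp: ball_def\<close>)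
    also have "\<dots> \<le> card {1..n::nat}" by (rule card_mono) (auto simp: ball_def)
    finally show ?thesis by simp
  qed
  define c where "c = (\<lambda>v. SOME z. z \<in> Z \<and> reach G z v (2 * a))"
  have c: "c v \<in> Z \<and> reach G (c v) v (2 * a)" if "v \<in> {1..n}" for v
    unfolding c_def using cover[OF that] by (metis (mono_tags, lifting) someI_ex)
  define cls where "cls = (\<lambda>z. {v \<in> {1..n}. c v = z})"
  have "\<forall>z. \<exists>C. finite C \<and> (\<forall>X\<in>C. X \<noteq> {} \<and> X \<subseteq> cls z \<and> card X \<le> a) \<and> \<Union>C = cls z \<and>
             (\<forall>X\<in>C. \<forall>Y\<in>C. X \<noteq> Y \<longrightarrow> X \<inter> Y = {}) \<and> card C * a \<le> card (cls z) + a"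
    using a by (intro allI chunk) (auto simp: cls_def)
  then obtain C where C: "\<And>z. finite (C z)" "\<And>z X. X \<in> C z \<Longrightarrow> X \<noteq> {} \<and> X \<subseteq> cls z \<and> card X \<le> a"
     "\<And>z. \<Union>(C z) = cls z" "\<And>z X Y. X \<in> C z \<Longrightarrow> Y \<in> C z \<Longrightarrow> X \<noteq> Y \<Longrightarrow> X \<inter> Y = {}"
     "\<And>z. card (C z) * a \<le> card (cls z) + a"
    by metis
  define P where "P = (\<Union>z\<in>Z. C z)"
  have cls_disj: "cls z \<inter> cls z' = {}" if "z \<noteq> z'" for z z' using that by (auto simp: cls_def)
  show ?thesis
  proof (intro exI[of _ P] conjI)
    show "finite P" unfolding P_def using finZ C(1) by auto
    show "\<Union>P = {1..n}"
    proof
      show "\<Union>P \<subseteq> {1..n}" unfolding P_def using C(2) by (fastforce simp: cls_def)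
      show "{1..n} \<subseteq> \<Union>P"
      proof
        fix v assume v: "v \<in> {1..n}"
        hence "v \<in> cls (c v)" by (simp add: cls_def)
        hence "v \<in> \<Union>(C (c v))" using C(3) by simp
        thus "v \<in> \<Union>P" unfolding P_def using c[OF v] by blast
      qed
    qed
    show "\<forall>Q\<in>P. \<forall>Q'\<in>P. Q \<noteq> Q' \<longrightarrow> Q \<inter> Q' = {}"
    proof (intro ballI impI)
      fix Q Q' assume "Q \<in> P" "Q' \<in> P" "Q \<noteq> Q'"
      then obtain z z' where "z \<in> Z" "z' \<in> Z" "Q \<in> C z" "Q' \<in> C z'" using \<open>Q \<in> P\<close> unfolding P_def by blast
      thus "Q \<inter> Q' = {}"
        using C(2)[of Q z] C(2)[of Q' z'] C(4)[of Q z Q'] cls_disj[of z z'] \<open>Q \<noteq> Q'\<close> by (cases "z = z'") auto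
    qed
    show "\<forall>Q\<in>P. card Q \<le> a \<and> (\<forall>x\<in>Q. \<forall>y\<in>Q. reach G x y (4 * a))"
    proof (intro ballI conjI)
      fix Q assume "Q \<in> P"
      then obtain z where z: "z \<in> Z" "Q \<in> C z" unfolding P_def by blast
      show "card Q \<le> a" using C(2)[OF z(2)] by simp
      fix x y assume "x \<in> Q" "y \<in> Q"
      hence "x \<in> cls z" "y \<in> cls z" using C(2)[OF z(2)] by auto
      hence xy: "x \<in> {1..n}" "c x = z" "y \<in> {1..n}" "c y = z" by (auto simp: cls_def)
      have "reach G z x (2 * a)" "reach G z y (2 * a)" using c[OF xy(1)] c[OF xy(3)] xy by auto
      hence "reach G x y (2 * a + 2 * a)" by (meson reach_sym reach_trans)
      thus "reach G x y (4 * a)" by simp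
    qed
    have "card P * a \<le> (\<Sum>z\<in>Z. card (C z)) * a"
      unfolding P_def by (intro mult_right_mono card_UN_le finZ) simp
    also have "\<dots> = (\<Sum>z\<in>Z. card (C z) * a)" by (simp add: sum_distrib_right)
    also have "\<dots> \<le> (\<Sum>z\<in>Z. card (cls z) + a)" by (intro sum_mono C(5))
    also have "\<dots> = (\<Sum>z\<in>Z. card (cls z)) + card Z * a" by (simp add: sum.distrib)
    also have "(\<Sum>z\<in>Z. card (cls z)) = card (\<Union>z\<in>Z. cls z)"
      by (rule card_UN_disjoint[symmetric]) (use finZ cls_disj in \<open>auto simp: cls_def\<close>)
    also have "\<dots> \<le> card {1..n}" by (rule card_mono) (auto simp: cls_def)
    also have "\<dots> = n" by simp
    finally show "card P * a \<le> 2 * n" using cardZ by (simp add: algebra_simps)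
  qed
qed

definition nbr :: "nat set set \<Rightarrow> nat set set \<Rightarrow> nat set set \<Rightarrow> nat set set \<Rightarrow> nat set set" where
  "nbr P B L R = {Q \<in> P - B. \<exists>x\<in>\<Union>L. \<exists>y\<in>Q. {x, y} \<in> R}"

fun bfs :: "nat set set \<Rightarrow> nat set set \<Rightarrow> nat set set \<Rightarrow> nat \<Rightarrow> nat set set \<times> nat set set" where
  "bfs P S R 0 = (S, S)"
| "bfs P S R (Suc i) = (case bfs P S R i of (B, L) \<Rightarrow> (B \<union> nbr P B L R, nbr P B L R))"

lemma bfs_Suc': "bfs P S R i = (B, L) \<Longrightarrow> bfs P S R (Suc i) = (B \<union> nbr P B L R, nbr P B L R)"
  by simp

lemma bfs_inv: "S \<subseteq> P \<Longrightarrow> bfs P S R i = (B, L) \<Longrightarrow> L \<subseteq> B \<and> B \<subseteq> P"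
proof (induction i arbitrary: B L)
  case 0 thus ?case by auto
next
  case (Suc i)
  obtain B0 L0 where b: "bfs P S R i = (B0, L0)" by fastforce
  have "L0 \<subseteq> B0 \<and> B0 \<subseteq> P" using Suc.IH[OF Suc.prems(1) b] .
  thus ?case using Suc.prems(2) b by (auto simp: nbr_def)
qed

lemma bfs_mono: "bfs P S R i = (B, L) \<Longrightarrow> bfs P S R j = (B', L') \<Longrightarrow> i \<le> j \<Longrightarrow> B \<subseteq> B'"
proof (induction j arbitrary: B' L')
  case 0 thus ?case by simp
next
  case (Suc j)
  show ?case
  proof (cases "i = Suc j")
    case True thus ?thesis using Suc.prems by simp
  next
    case False
    obtain B0 L0 where b: "bfs P S R j = (B0, L0)" by fastforce
    have "B \<subseteq> B0" using Suc.IH[OF Suc.prems(1) b] Suc.prems(3) False by simp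
    thus ?thesis using Suc.prems(2) b by auto
  qed
qed

lemma bfs_local:
  assumes "bfs P S R i = (B, L)" "\<And>e. e \<inter> \<Union>(B - L) \<noteq> {} \<Longrightarrow> (e \<in> R \<longleftrightarrow> e \<in> R')" "S \<subseteq> P"
  shows "bfs P S R' i = (B, L)"
  using assms
proof (induction i arbitrary: B L)
  case 0 thus ?case by auto
next
  case (Suc i)
  obtain B0 L0 where b: "bfs P S R i = (B0, L0)" by fastforce
  have inv: "L0 \<subseteq> B0" "B0 \<subseteq> P" using bfs_inv[OF Suc.prems(3) b] by auto
  have BL: "B = B0 \<union> nbr P B0 L0 R" "L = nbr P B0 L0 R" using Suc.prems(1) b by auto
  have BmL: "B - L = B0" using BL by (auto simp: nbr_def)
  have agree: "e \<in> R \<longleftrightarrow> e \<in> R'" if "e \<inter> \<Union>B0 \<noteq> {}" for e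
    using Suc.prems(2) that BmL by simp
  have "bfs P S R' i = (B0, L0)"
  proof (rule Suc.IH[OF b _ Suc.prems(3)])
    fix e assume "e \<inter> \<Union>(B0 - L0) \<noteq> {}"
    hence "e \<inter> \<Union>B0 \<noteq> {}" by blast
    thus "e \<in> R \<longleftrightarrow> e \<in> R'" by (rule agree)
  qed
  moreover have "nbr P B0 L0 R' = nbr P B0 L0 R"
  proof -
    have "{x, y} \<in> R \<longleftrightarrow> {x, y} \<in> R'" if "x \<in> \<Union>L0" for x y
      using agree[of "{x,y}"] that inv by blast
    thus ?thesis unfolding nbr_def by blast
  qed
  ultimately show ?case using BL by simp
qed

definition pdisj :: "nat set set \<Rightarrow> bool" where
  "pdisj P \<longleftrightarrow> (\<forall>Q\<in>P. \<forall>Q'\<in>P. Q \<noteq> Q' \<longrightarrow> Q \<inter> Q' = {})"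

lemma nbr_local:
  assumes "pdisj P" "L \<subseteq> B" "B \<subseteq> P"
  shows "nbr P B L R = nbr P B L (R - {e. e \<inter> \<Union>(B - L) \<noteq> {}})"
proof -
  have "{x, y} \<inter> \<Union>(B - L) = {}" if xyQ: "x \<in> \<Union>L" "y \<in> Q" "Q \<in> P - B" for x y Q
  proof -
    obtain Q1 where Q1: "Q1 \<in> L" "x \<in> Q1" using xyQ by auto
    have "x \<notin> \<Union>(B - L)"
    proof
      assume "x \<in> \<Union>(B - L)"
      then obtain Q2 where "Q2 \<in> B - L" "x \<in> Q2" by auto
      moreover hence "Q1 \<noteq> Q2" using Q1 by auto
      ultimately show False using assms Q1 unfolding pdisj_def by blast
    qed
    moreover have "y \<notin> \<Union>(B - L)"
    proof
      assume "y \<in> \<Union>(B - L)"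
      then obtain Q2 where "Q2 \<in> B - L" "y \<in> Q2" by auto
      moreover hence "Q \<noteq> Q2" using xyQ by auto
      ultimately show False using assms xyQ unfolding pdisj_def by blast
    qed
    ultimately show ?thesis by auto
  qed
  thus ?thesis unfolding nbr_def by blast
qed

lemma bfs_reach:
  assumes "S = {Q \<in> P. \<exists>z\<in>Q. reach G u z r0}" "\<forall>Q\<in>P. \<forall>x\<in>Q. \<forall>y\<in>Q. reach G x y (4 * a)"
    "bfs P S R i = (B, L)" "Q \<in> B" "y \<in> Q"
  shows "reach (G \<union> R) u y (r0 + 4 * a + i * (4 * a + 1))"
  using assms(3-5)
proof (induction i arbitrary: B L Q y)
  case 0
  hence "Q \<in> S" by simp
  then obtain z where z: "z \<in> Q" "reach G u z r0" "Q \<in> P" using assms(1) by auto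
  have "reach G z y (4 * a)" using assms(2) z 0 by blast
  hence "reach G u y (r0 + 4 * a)" using z by (intro reach_trans)
  thus ?case by (rule reach_mono) auto
next
  case (Suc i)
  obtain B0 L0 where b: "bfs P S R i = (B0, L0)" by fastforce
  have BL: "B = B0 \<union> nbr P B0 L0 R" "L = nbr P B0 L0 R" using Suc.prems(1) b by auto
  show ?case
  proof (cases "Q \<in> B0")
    case True
    show ?thesis by (rule reach_mono[OF Suc.IH[OF b True Suc.prems(3)]]) auto
  next
    case False
    hence "Q \<in> nbr P B0 L0 R" using BL Suc.prems(2) by auto
    then obtain x y' where xy: "x \<in> \<Union>L0" "y' \<in> Q" "{x, y'} \<in> R" "Q \<in> P" unfolding nbr_def by auto
    obtain Q1 where Q1: "Q1 \<in> L0" "x \<in> Q1" using xy by auto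
    have "L0 \<subseteq> B0"
    proof (cases i)
      case 0 thus ?thesis using b by auto
    next
      case (Suc j)
      obtain B1 L1 where "bfs P S R j = (B1, L1)" by fastforce
      thus ?thesis using b Suc by (auto simp: nbr_def)
    qed
    hence "Q1 \<in> B0" using Q1 by auto
    hence r1: "reach (G \<union> R) u x (r0 + 4 * a + i * (4 * a + 1))" using Suc.IH[OF b _ Q1(2)] by simp
    have r2: "reach (G \<union> R) x y' 1" using xy by (intro reach_mono[OF reach_edge]) auto
    have r3: "reach (G \<union> R) y' y (4 * a)" using assms(2) xy Suc.prems(3)
      by (meson reach_mono le_refl Un_upper1)
    have "reach (G \<union> R) u y (r0 + 4 * a + i * (4 * a + 1) + 1 + 4 * a)"
      using reach_trans[OF reach_trans[OF r1 r2] r3] .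
    thus ?thesis by simp
  qed
qed

lemma card_Union_pdisj:
  assumes "pdisj P" "B \<subseteq> P" "B' \<subseteq> P" "B \<inter> B' = {}" "\<forall>Q\<in>P. finite Q" "finite P"
  shows "card (\<Union>(B \<union> B')) = card (\<Union>B) + card (\<Union>B')"
proof -
  have "\<Union>B \<inter> \<Union>B' = {}"
  proof (rule ccontr)
    assume "\<Union>B \<inter> \<Union>B' \<noteq> {}"
    then obtain x Q Q' where "x \<in> Q" "x \<in> Q'" "Q \<in> B" "Q' \<in> B'" by blast
    moreover hence "Q \<noteq> Q'" using assms(4) by auto
    ultimately show False using assms(1-3) unfolding pdisj_def by blast
  qed
  moreover have "finite (\<Union>B)" "finite (\<Union>B')" using assms(2,3,5,6)
    by (meson finite_Union finite_subset subsetD)+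
  ultimately show ?thesis by (simp add: card_Un_disjoint)
qed

lemma fail_prob:
  fixes n a W0 :: nat and \<epsilon> :: real
  assumes n: "n > 0" and a: "a > 0" and eps: "\<epsilon> > 0" "\<epsilon> * a \<ge> 64" "\<epsilon> \<le> n"
    and P: "finite P" "\<Union>P = {1..n}" "pdisj P" "\<forall>Q\<in>P. card Q \<le> a" "real (card P) \<le> 2 * real n / real a"
    and S: "S \<subseteq> P"
  shows "measure_pmf.prob (gnp n (\<epsilon> / n))
    {R. case bfs P S R i of (B, L) \<Rightarrow> real (card (\<Union>B)) \<le> real n / 2 \<and> W0 \<le> card (\<Union>L) \<and>
          real (card (\<Union>(nbr P B L R))) < min (2 * real (card (\<Union>L))) (real n / 128)}
     \<le> exp (- min (\<epsilon> * W0 / 128) (real n / (64 * a)))"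
proof -
  define M where "M = gnp n (\<epsilon> / n)"
  define \<delta> where "\<delta> = exp (- min (\<epsilon> * W0 / 128) (real n / (64 * a)))"
  define H where "H = {(B, L). B \<subseteq> P \<and> L \<subseteq> B \<and> real (card (\<Union>B)) \<le> real n / 2 \<and> W0 \<le> card (\<Union>L)}"
  define A where "A = (\<lambda>h. {R. bfs P S R i = h})"
  define C where "C = (\<lambda>h. {R. real (card (\<Union>(nbr P (fst h) (snd h) R))) < min (2 * real (card (\<Union>(snd h)))) (real n / 128)})"
  have finH: "finite H"
  proof -
    have "H \<subseteq> Pow P \<times> Pow P" unfolding H_def by auto
    thus ?thesis by (rule finite_subset) (use P(1) in auto)
  qed
  have finQ: "\<forall>Q\<in>P. finite Q" using P(2) by (metis Union_upper finite_atLeastAtMost finite_subset)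
  have sub: "{R. case bfs P S R i of (B, L) \<Rightarrow> real (card (\<Union>B)) \<le> real n / 2 \<and> W0 \<le> card (\<Union>L) \<and>
          real (card (\<Union>(nbr P B L R))) < min (2 * real (card (\<Union>L))) (real n / 128)} \<subseteq> (\<Union>h\<in>H. A h \<inter> C h)"
  proof
    fix R assume R: "R \<in> {R. case bfs P S R i of (B, L) \<Rightarrow> real (card (\<Union>B)) \<le> real n / 2 \<and> W0 \<le> card (\<Union>L) \<and>
          real (card (\<Union>(nbr P B L R))) < min (2 * real (card (\<Union>L))) (real n / 128)}"
    obtain B L where b: "bfs P S R i = (B, L)" by fastforce
    have "L \<subseteq> B \<and> B \<subseteq> P" by (rule bfs_inv[OF S b])
    hence "(B, L) \<in> H" "R \<in> A (B, L)" "R \<in> C (B, L)" using R b by (auto simp: H_def A_def C_def)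
    thus "R \<in> (\<Union>h\<in>H. A h \<inter> C h)" by blast
  qed
  have key: "measure_pmf.prob M (A h \<inter> C h) \<le> measure_pmf.prob M (A h) * \<delta>" if h: "h \<in> H" for h
  proof -
    obtain B L where hBL: "h = (B, L)" by fastforce
    have BL: "B \<subseteq> P" "L \<subseteq> B" "real (card (\<Union>B)) \<le> real n / 2" "W0 \<le> card (\<Union>L)"
      using h hBL unfolding H_def by auto
    define X where "X = {e. e \<inter> \<Union>(B - L) \<noteq> {}}"
    have AX: "A h = {R. bfs P S (R \<inter> X) i = (B, L)}"
    proof -
      have "bfs P S R i = (B, L) \<longleftrightarrow> bfs P S (R \<inter> X) i = (B, L)" for R
      proof
        assume "bfs P S R i = (B, L)"
        thus "bfs P S (R \<inter> X) i = (B, L)" by (rule bfs_local[OF _ _ S]) (auto simp: X_def)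
      next
        assume "bfs P S (R \<inter> X) i = (B, L)"
        thus "bfs P S R i = (B, L)" by (rule bfs_local[OF _ _ S]) (auto simp: X_def)
      qed
      thus ?thesis unfolding A_def hBL by auto
    qed
    have CX: "C h = {R. real (card (\<Union>(nbr P B L (R - X)))) < min (2 * real (card (\<Union>L))) (real n / 128)}"
      unfolding C_def hBL X_def using nbr_local[OF P(3) BL(2) BL(1)] by simp
    have AC: "A h \<inter> C h = {R. bfs P S (R \<inter> X) i = (B, L) \<and>
        real (card (\<Union>(nbr P B L (R - X)))) < min (2 * real (card (\<Union>L))) (real n / 128)}"
      unfolding AX CX by blast
    have "measure_pmf.prob M (A h \<inter> C h) = measure_pmf.prob M (A h) * measure_pmf.prob M (C h)"
      unfolding AC unfolding AX CX M_def gnp_rs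
      by (rule rs_indep[OF finite_all_edges, where \<phi> = "\<lambda>Y. bfs P S Y i = (B, L)" and
            \<psi> = "\<lambda>Y. real (card (\<Union>(nbr P B L Y))) < min (2 * real (card (\<Union>L))) (real n / 128)"])
    also have "measure_pmf.prob M (C h) \<le> \<delta>"
    proof -
      have UL: "\<Union>L \<subseteq> {1..n}" "\<Union>(P - B) \<subseteq> {1..n}" using BL P(2) by auto
      have dj: "\<Union>L \<inter> \<Union>(P - B) = {}"
      proof (rule ccontr)
        assume "\<Union>L \<inter> \<Union>(P - B) \<noteq> {}"
        then obtain x Q Q' where "x \<in> Q" "x \<in> Q'" "Q \<in> L" "Q' \<in> P - B" by blast
        moreover hence "Q \<noteq> Q'" "Q \<in> P" using BL by auto
        ultimately show False using P(3) unfolding pdisj_def by blast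
      qed
      have sz: "\<forall>Q\<in>P - B. card Q \<le> a" using P(4) by auto
      have pd: "\<forall>Q\<in>P - B. \<forall>Q'\<in>P - B. Q \<noteq> Q' \<longrightarrow> Q \<inter> Q' = {}" using P(3) unfolding pdisj_def by auto
      have cU: "card (\<Union>P) = card (\<Union>B) + card (\<Union>(P - B))"
      proof -
        have "P = B \<union> (P - B)" using BL by auto
        hence "card (\<Union>P) = card (\<Union>(B \<union> (P - B)))" by simp
        also have "\<dots> = card (\<Union>B) + card (\<Union>(P - B))"
          by (rule card_Union_pdisj[OF P(3) BL(1) _ _ finQ P(1)]) auto
        finally show ?thesis .
      qed
      have big: "real n / 2 \<le> real (card (\<Union>(P - B)))" using cU P(2) BL(3) by simp
      have cnt: "real (card (P - B)) \<le> 2 * real n / real a"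
        using P(5) card_mono[OF P(1), of "P - B"] by (meson Diff_subset of_nat_le_iff order_trans)
      have "measure_pmf.prob M (C h) \<le> exp (- min (\<epsilon> * card (\<Union>L) / 128) (real n / (64 * a)))"
        unfolding M_def C_def hBL fst_conv snd_conv nbr_def
        by (rule step_prob[OF n a eps UL(1) UL(2) dj sz pd big cnt])
      also have "\<dots> \<le> \<delta>"
      proof -
        have "\<epsilon> * W0 / 128 \<le> \<epsilon> * card (\<Union>L) / 128" using BL(4) eps
          by (intro divide_right_mono mult_left_mono) auto
        hence "min (\<epsilon> * W0 / 128) (real n / (64 * a)) \<le> min (\<epsilon> * card (\<Union>L) / 128) (real n / (64 * a))"
          by linarith
        thus ?thesis unfolding \<delta>_def by simp
      qed
      finally show ?thesis .
    qed
    hence "measure_pmf.prob M (A h) * measure_pmf.prob M (C h) \<le> measure_pmf.prob M (A h) * \<delta>"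
      by (intro mult_left_mono) auto
    finally show ?thesis .
  qed
  have "measure_pmf.prob M {R. case bfs P S R i of (B, L) \<Rightarrow> real (card (\<Union>B)) \<le> real n / 2 \<and> W0 \<le> card (\<Union>L) \<and>
          real (card (\<Union>(nbr P B L R))) < min (2 * real (card (\<Union>L))) (real n / 128)}
      \<le> measure_pmf.prob M (\<Union>h\<in>H. A h \<inter> C h)"
    by (rule measure_pmf.finite_measure_mono[OF sub]) simp
  also have "\<dots> \<le> (\<Sum>h\<in>H. measure_pmf.prob M (A h \<inter> C h))"
    by (rule measure_pmf.finite_measure_subadditive_finite[OF finH]) auto
  also have "\<dots> \<le> (\<Sum>h\<in>H. measure_pmf.prob M (A h) * \<delta>)" by (intro sum_mono key)
  also have "\<dots> = measure_pmf.prob M (\<Union>h\<in>H. A h) * \<delta>"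
    by (subst measure_pmf.finite_measure_finite_Union[OF finH])
       (auto simp: disjoint_family_on_def A_def sum_distrib_right)
  also have "\<dots> \<le> 1 * \<delta>" unfolding \<delta>_def by (intro mult_right_mono) auto
  finally show ?thesis by (simp add: M_def \<delta>_def)
qed

lemma growth:
  fixes n W0 T1 :: nat
  assumes P: "pdisj P" "finite P" "\<forall>Q\<in>P. finite Q" and S: "S \<subseteq> P"
    and n: "n > 0" and W: "1 \<le> W0" "real W0 \<le> real n / 128" "W0 \<le> card (\<Union>S)"
    and T: "real n / 128 \<le> 2 ^ T1 * real W0"
    and nf: "\<forall>i<T1 + 65. case bfs P S R i of (B, L) \<Rightarrow> \<not> (real (card (\<Union>B)) \<le> real n / 2 \<and> W0 \<le> card (\<Union>L) \<and>
          real (card (\<Union>(nbr P B L R))) < min (2 * real (card (\<Union>L))) (real n / 128))"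
  shows "real n / 2 < real (card (\<Union>(fst (bfs P S R (T1 + 65)))))"
proof (rule ccontr)
  define T where "T = T1 + 65"
  define wB where "wB = (\<lambda>i. real (card (\<Union>(fst (bfs P S R i)))))"
  define wL where "wL = (\<lambda>i. real (card (\<Union>(snd (bfs P S R i)))))"
  assume "\<not> real n / 2 < real (card (\<Union>(fst (bfs P S R (T1 + 65)))))"
  hence BT: "wB T \<le> real n / 2" by (simp add: wB_def T_def)
  have inv: "snd (bfs P S R i) \<subseteq> fst (bfs P S R i) \<and> fst (bfs P S R i) \<subseteq> P" for i
    using bfs_inv[OF S, of R i "fst (bfs P S R i)" "snd (bfs P S R i)"] by simp
  have finU: "finite (\<Union>X)" if "X \<subseteq> P" for X using that P(2,3) by (meson finite_Union finite_subset subsetD)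
  have wBmono: "wB i \<le> wB T" if "i \<le> T" for i
  proof -
    have "fst (bfs P S R i) \<subseteq> fst (bfs P S R T)"
      using bfs_mono[of P S R i _ _ T] that by (metis prod.collapse)
    hence "\<Union>(fst (bfs P S R i)) \<subseteq> \<Union>(fst (bfs P S R T))" by auto
    thus ?thesis unfolding wB_def using finU inv by (simp add: card_mono)
  qed
  have add: "wB (Suc i) = wB i + wL (Suc i)" for i
  proof -
    obtain B L where b: "bfs P S R i = (B, L)" by fastforce
    have BP: "B \<subseteq> P" using inv[of i] b by simp
    have "card (\<Union>(B \<union> nbr P B L R)) = card (\<Union>B) + card (\<Union>(nbr P B L R))"
      by (rule card_Union_pdisj[OF P(1) BP _ _ P(3) P(2)]) (auto simp: nbr_def)
    thus ?thesis using b by (simp add: wB_def wL_def)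
  qed
  have lower: "min (2 ^ i * real W0) (real n / 128) \<le> wL i" if "i \<le> T" for i
    using that
  proof (induction i)
    case 0
    thus ?case using W(3) by (simp add: wL_def)
  next
    case (Suc i)
    obtain B L where b: "bfs P S R i = (B, L)" by fastforce
    have IH: "min (2 ^ i * real W0) (real n / 128) \<le> wL i" using Suc by simp
    have "real W0 \<le> min (2 ^ i * real W0) (real n / 128)"
    proof -
      have "1 * real W0 \<le> 2 ^ i * real W0" by (intro mult_right_mono) auto
      thus ?thesis using W(2) by simp
    qed
    moreover have "wL i = real (card (\<Union>L))" using b by (simp add: wL_def)
    ultimately have "real W0 \<le> real (card (\<Union>L))" using IH by linarith
    hence W0L: "W0 \<le> card (\<Union>L)" by simp
    have "wB i \<le> real n / 2" using wBmono[of i] BT Suc by simp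
    hence Bh: "real (card (\<Union>B)) \<le> real n / 2" using b by (simp add: wB_def)
    have "i < T1 + 65" using Suc by (simp add: T_def)
    hence "\<not> (real (card (\<Union>B)) \<le> real n / 2 \<and> W0 \<le> card (\<Union>L) \<and>
          real (card (\<Union>(nbr P B L R))) < min (2 * real (card (\<Union>L))) (real n / 128))"
      using nf b by force
    hence "min (2 * real (card (\<Union>L))) (real n / 128) \<le> real (card (\<Union>(nbr P B L R)))"
      using Bh W0L by linarith
    moreover have "wL (Suc i) = real (card (\<Union>(nbr P B L R)))" using b by (simp add: wL_def)
    moreover have "wL i = real (card (\<Union>L))" using b by (simp add: wL_def)
    moreover have "min (2 ^ Suc i * real W0) (real n / 128) \<le> min (2 * wL i) (real n / 128)"
    proof -
      have "min (2 ^ Suc i * real W0) (real n / 128) \<le> 2 * wL i"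
      proof (cases "2 ^ i * real W0 \<le> real n / 128")
        case True
        hence "2 ^ i * real W0 \<le> wL i" using IH by simp
        hence "2 ^ Suc i * real W0 \<le> 2 * wL i" by simp
        thus ?thesis by simp
      next
        case False
        hence "real n / 128 \<le> wL i" using IH by simp
        moreover have "0 \<le> wL i" by (simp add: wL_def)
        ultimately show ?thesis by simp
      qed
      thus ?thesis by simp
    qed
    ultimately show ?case by linarith
  qed
  have big: "real n / 128 \<le> wL i" if "T1 \<le> i" "i \<le> T" for i
  proof -
    have "(2::real) ^ T1 \<le> 2 ^ i" using that by (intro power_increasing) auto
    hence "2 ^ T1 * real W0 \<le> 2 ^ i * real W0" by (intro mult_right_mono) auto
    thus ?thesis using lower[OF that(2)] T by (auto simp: min_def split: if_splits)
  qed
  have acc: "real j * (real n / 128) \<le> wB (T1 + j)" if "j \<le> 65" for j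
    using that
  proof (induction j)
    case 0 thus ?case by (simp add: wB_def)
  next
    case (Suc j)
    have "wB (T1 + Suc j) = wB (T1 + j) + wL (Suc (T1 + j))" using add[of "T1 + j"] by simp
    moreover have "real n / 128 \<le> wL (Suc (T1 + j))" using Suc by (intro big) (auto simp: T_def)
    ultimately show ?case using Suc by (simp add: algebra_simps)
  qed
  have "65 * (real n / 128) \<le> wB T" using acc[of 65] by (simp add: T_def)
  thus False using BT n by simp
qed

lemma main_n:
  fixes n a W0 T1 :: nat and \<epsilon> :: real and G :: "nat set set"
  assumes gr: "is_graph n G" and con: "graph_connected n G" and eps: "\<epsilon> > 0" "\<epsilon> * a \<ge> 64" "\<epsilon> \<le> n"
    and a: "a > 0" "a < n" and W: "1 \<le> W0" "real W0 \<le> real n / 128"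
    and T: "real n / 128 \<le> 2 ^ T1 * real W0"
  shows "1 - real n * real (T1 + 65) * exp (- min (\<epsilon> * W0 / 128) (real n / (64 * a)))
     \<le> measure_pmf.prob (gnp n (\<epsilon> / n))
         {R. \<exists>k. graph_diam n (G \<union> R) = enat k \<and> k \<le> 2 * (W0 + 4 * a + (T1 + 65) * (4 * a + 1))}"
proof -
  have n: "n > 0" using a by simp
  have G: "G \<subseteq> all_edges n" using gr by (simp add: is_graph_def)
  obtain P where Pc: "finite P \<and> \<Union>P = {1..n} \<and> (\<forall>Q\<in>P. \<forall>Q'\<in>P. Q \<noteq> Q' \<longrightarrow> Q \<inter> Q' = {}) \<and>
     (\<forall>Q\<in>P. card Q \<le> a \<and> (\<forall>x\<in>Q. \<forall>y\<in>Q. reach G x y (4 * a))) \<and> card P * a \<le> 2 * n"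
    using pieces[OF G con a] by (rule exE)
  have P: "finite P" "\<Union>P = {1..n}" "\<forall>Q\<in>P. \<forall>Q'\<in>P. Q \<noteq> Q' \<longrightarrow> Q \<inter> Q' = {}"
     "\<forall>Q\<in>P. card Q \<le> a \<and> (\<forall>x\<in>Q. \<forall>y\<in>Q. reach G x y (4 * a))" "card P * a \<le> 2 * n"
    using Pc by simp_all
  have pd: "pdisj P" using P(3) by (simp add: pdisj_def)
  have szP: "\<forall>Q\<in>P. card Q \<le> a" using P(4) by simp
  have dmP: "\<forall>Q\<in>P. \<forall>x\<in>Q. \<forall>y\<in>Q. reach G x y (4 * a)" using P(4) by simp
  have cP: "real (card P) \<le> 2 * real n / real a"
  proof -
    have "real (card P) * real a \<le> 2 * real n" using P(5) by (metis of_nat_le_iff of_nat_mult of_nat_numeral)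
    thus ?thesis using a by (simp add: field_simps)
  qed
  have finQ: "\<forall>Q\<in>P. finite Q" using P(2) by (metis Union_upper finite_atLeastAtMost finite_subset)
  define S where "S = (\<lambda>u. {Q \<in> P. \<exists>z\<in>Q. reach G u z W0})"
  define T where "T = T1 + 65"
  define D where "D = W0 + 4 * a + T * (4 * a + 1)"
  define Fail where "Fail = (\<lambda>u i. {R. case bfs P (S u) R i of (B, L) \<Rightarrow> real (card (\<Union>B)) \<le> real n / 2 \<and> W0 \<le> card (\<Union>L) \<and>
          real (card (\<Union>(nbr P B L R))) < min (2 * real (card (\<Union>L))) (real n / 128)})"
  define \<delta> where "\<delta> = exp (- min (\<epsilon> * W0 / 128) (real n / (64 * a)))"
  define Bad where "Bad = (\<Union>u\<in>{1..n}. \<Union>i\<in>{..<T}. Fail u i)"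
  have SP: "S u \<subseteq> P" for u by (auto simp: S_def)
  have wS: "W0 \<le> card (\<Union>(S u))" if u: "u \<in> {1..n}" for u
  proof -
    have "min n (Suc W0) \<le> card {v \<in> {1..n}. reach G u v W0}" by (rule ball_card[OF G con u])
    also have "\<dots> \<le> card (\<Union>(S u))"
    proof (rule card_mono)
      show "finite (\<Union>(S u))" using SP P(1) finQ by (meson finite_Union finite_subset subsetD)
      show "{v \<in> {1..n}. reach G u v W0} \<subseteq> \<Union>(S u)"
      proof
        fix v assume v: "v \<in> {v \<in> {1..n}. reach G u v W0}"
        then obtain Q where "Q \<in> P" "v \<in> Q" using P(2) by blast
        thus "v \<in> \<Union>(S u)" using v unfolding S_def by blast
      qed
    qed
    finally show ?thesis using W(2) by simp
  qed
  have good: "R \<in> {R. \<exists>k. graph_diam n (G \<union> R) = enat k \<and> k \<le> 2 * D}" if R: "R \<notin> Bad" for R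
  proof -
    define U where "U = (\<lambda>u. \<Union>(fst (bfs P (S u) R T)))"
    have UP: "U u \<subseteq> {1..n}" for u
      using bfs_inv[OF SP, of u R T "fst (bfs P (S u) R T)" "snd (bfs P (S u) R T)"] P(2)
      unfolding U_def by auto
    have Ubig: "real n / 2 < real (card (U u))" if u: "u \<in> {1..n}" for u
    proof -
      have "\<forall>i<T1 + 65. case bfs P (S u) R i of (B, L) \<Rightarrow> \<not> (real (card (\<Union>B)) \<le> real n / 2 \<and> W0 \<le> card (\<Union>L) \<and>
          real (card (\<Union>(nbr P B L R))) < min (2 * real (card (\<Union>L))) (real n / 128))"
      proof (intro allI impI)
        fix i assume "i < T1 + 65"
        hence "R \<notin> Fail u i" using R u unfolding Bad_def T_def by blast
        thus "case bfs P (S u) R i of (B, L) \<Rightarrow> \<not> (real (card (\<Union>B)) \<le> real n / 2 \<and> W0 \<le> card (\<Union>L) \<and>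
          real (card (\<Union>(nbr P B L R))) < min (2 * real (card (\<Union>L))) (real n / 128))"
          unfolding Fail_def by (auto split: prod.splits)
      qed
      from growth[OF pd P(1) finQ SP n W(1,2) wS[OF u] T this] show ?thesis
        by (simp add: U_def T_def)
    qed
    have reachU: "reach (G \<union> R) u y D" if yU: "y \<in> U u" for u y
    proof -
      obtain Q where Q: "Q \<in> fst (bfs P (S u) R T)" "y \<in> Q" using yU unfolding U_def by blast
      show ?thesis unfolding D_def
        by (rule bfs_reach[OF S_def[THEN fun_cong] dmP _ Q(1) Q(2), where L = "snd (bfs P (S u) R T)"]) simp
    qed
    have "\<forall>u\<in>{1..n}. \<forall>v\<in>{1..n}. reach (G \<union> R) u v (2 * D)"
    proof (intro ballI)
      fix u v assume u: "u \<in> {1..n}" and v: "v \<in> {1..n}"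
      have "U u \<inter> U v \<noteq> {}"
      proof
        assume dj: "U u \<inter> U v = {}"
        have "card (U u \<union> U v) = card (U u) + card (U v)"
          using dj UP by (intro card_Un_disjoint) (auto intro: finite_subset)
        moreover have "card (U u \<union> U v) \<le> n" using UP card_mono[of "{1..n}" "U u \<union> U v"] by auto
        moreover have "real n < real (card (U u)) + real (card (U v))" using Ubig[OF u] Ubig[OF v] by simp
        ultimately show False by linarith
      qed
      then obtain y where "y \<in> U u" "y \<in> U v" by blast
      hence "reach (G \<union> R) u y D" "reach (G \<union> R) y v D" using reachU reach_sym by blast+
      hence "reach (G \<union> R) u v (D + D)" by (rule reach_trans)
      thus "reach (G \<union> R) u v (2 * D)" by (simp add: mult_2)
    qed
    thus ?thesis using diam_le by blast
  qed
  have bad: "measure_pmf.prob (gnp n (\<epsilon> / n)) Bad \<le> real n * real T * \<delta>"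
  proof -
    have "measure_pmf.prob (gnp n (\<epsilon> / n)) Bad \<le> (\<Sum>u\<in>{1..n}. measure_pmf.prob (gnp n (\<epsilon> / n)) (\<Union>i\<in>{..<T}. Fail u i))"
      unfolding Bad_def by (rule measure_pmf.finite_measure_subadditive_finite) auto
    also have "\<dots> \<le> (\<Sum>u\<in>{1..n}. \<Sum>i\<in>{..<T}. measure_pmf.prob (gnp n (\<epsilon> / n)) (Fail u i))"
      by (intro sum_mono measure_pmf.finite_measure_subadditive_finite) auto
    also have "\<dots> \<le> (\<Sum>u\<in>{1..n}. \<Sum>i\<in>{..<T}. \<delta>)"
      unfolding Fail_def \<delta>_def
      by (intro sum_mono fail_prob[OF n a(1) eps P(1) P(2) pd szP cP SP])
    also have "\<dots> = real n * real T * \<delta>" by simp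
    finally show ?thesis .
  qed
  have "1 - real n * real T * \<delta> \<le> 1 - measure_pmf.prob (gnp n (\<epsilon> / n)) Bad" using bad by simp
  also have "\<dots> = measure_pmf.prob (gnp n (\<epsilon> / n)) (UNIV - Bad)"
    using measure_pmf.prob_compl[of Bad "gnp n (\<epsilon> / n)"] by simp
  also have "\<dots> \<le> measure_pmf.prob (gnp n (\<epsilon> / n)) {R. \<exists>k. graph_diam n (G \<union> R) = enat k \<and> k \<le> 2 * D}"
    using good by (intro measure_pmf.finite_measure_mono) auto
  finally show ?thesis by (simp add: D_def T_def \<delta>_def)
qed

lemma ev_lin: "eventually (\<lambda>n. K * ln (real n) \<le> real n) sequentially"
proof -
  have lim: "((\<lambda>n::nat. ln (real n) / real n) \<longlongrightarrow> 0) sequentially" by real_asymp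
  have "eventually (\<lambda>n. \<bar>ln (real n) / real n\<bar> < 1 / (\<bar>K\<bar> + 1)) sequentially"
    using lim[THEN tendstoD, of "1 / (\<bar>K\<bar> + 1)"] by (simp add: dist_real_def)
  moreover have "eventually (\<lambda>n::nat. n \<ge> 1) sequentially" by (rule eventually_ge_at_top)
  ultimately show ?thesis
  proof eventually_elim
    case (elim n)
    have n0: "real n > 0" using elim by simp
    have "\<bar>ln (real n)\<bar> < real n / (\<bar>K\<bar> + 1)" using elim(1) n0 by (simp add: field_simps abs_divide)
    hence "(\<bar>K\<bar> + 1) * \<bar>ln (real n)\<bar> \<le> real n" by (simp add: field_simps)
    moreover have "K * ln (real n) \<le> (\<bar>K\<bar> + 1) * \<bar>ln (real n)\<bar>"
      by (metis abs_ge_self abs_mult abs_ge_zero add_increasing2 mult_right_mono order_trans zero_le_one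
          abs_mult_pos' less_eq_real_def abs_of_nonneg)
    ultimately show ?case by linarith
  qed
qed

lemma ev_ln: "eventually (\<lambda>n. K \<le> ln (real n)) sequentially"
proof -
  have "filterlim (\<lambda>n::nat. ln (real n)) at_top sequentially" by real_asymp
  thus ?thesis by (simp add: filterlim_at_top)
qed

theorem theorem4:
  fixes \<epsilon> :: real
  assumes "\<epsilon> > 0"
  shows "\<exists>C>0. \<forall>G :: nat \<Rightarrow> nat set set.
           (\<forall>n. is_graph n (G n) \<and> graph_connected n (G n)) \<longrightarrow>
           ((\<lambda>n. measure_pmf.prob (gnp n (\<epsilon> / real n))
                  {R. \<exists>k. graph_diam n (G n \<union> R) = enat k \<and> real k \<le> C * ln (real n)})
             \<longlonglongrightarrow> 1)"
proof -
  define a where "a = nat \<lceil>64 / \<epsilon>\<rceil>"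
  have aeps: "64 / \<epsilon> \<le> real a" unfolding a_def by (rule real_nat_ceiling_ge)
  have "0 < 64 / \<epsilon>" using assms by simp
  hence "0 < real a" using aeps by linarith
  hence a0: "a > 0" by simp
  have ea: "\<epsilon> * a \<ge> 64" using aeps assms by (simp add: field_simps)
  define C where "C = 768 / \<epsilon> + 2 * (4 * real a + 1) / ln 2 + 1"
  have C0: "C > 0" unfolding C_def using assms by (simp add: add_pos_pos)
  define K0 :: real where "K0 = 4 + 8 * real a + 132 * (4 * real a + 1)"
  show ?thesis
  proof (intro exI[of _ C] conjI allI impI)
    show "C > 0" by (rule C0)
    fix G :: "nat \<Rightarrow> nat set set"
    assume G: "\<forall>n. is_graph n (G n) \<and> graph_connected n (G n)"
    define W0 where "W0 = (\<lambda>n::nat. nat \<lceil>384 / \<epsilon> * ln (real n)\<rceil> + 1)"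
    define T1 where "T1 = (\<lambda>n::nat. nat \<lceil>log 2 (real n)\<rceil>)"
    define f where "f = (\<lambda>n::nat. (log 2 (real n) + 66) / real n ^ 2)"
    define pr where "pr = (\<lambda>n. measure_pmf.prob (gnp n (\<epsilon> / real n))
                  {R. \<exists>k. graph_diam n (G n \<union> R) = enat k \<and> real k \<le> C * ln (real n)})"
    have flim: "(f \<longlongrightarrow> 0) sequentially" unfolding f_def by real_asymp
    have ev: "eventually (\<lambda>n. 1 - f n \<le> pr n) sequentially"
    proof -
      have e1: "eventually (\<lambda>n::nat. n \<ge> max 512 (max (Suc a) (nat \<lceil>\<epsilon>\<rceil>))) sequentially"
        by (rule eventually_ge_at_top)
      have e2: "eventually (\<lambda>n. (2 * 128 * 384 / \<epsilon>) * ln (real n) \<le> real n) sequentially" by (rule ev_lin)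
      have e3: "eventually (\<lambda>n. (192 * real a) * ln (real n) \<le> real n) sequentially" by (rule ev_lin)
      have e4: "eventually (\<lambda>n. K0 \<le> ln (real n)) sequentially" by (rule ev_ln)
      from e1 e2 e3 e4 show ?thesis
      proof eventually_elim
        case (elim n)
        have n512: "n \<ge> 512" using elim(1) by simp
        have na: "a < n" using elim(1) by simp
        have "nat \<lceil>\<epsilon>\<rceil> \<le> n" using elim(1) by simp
        hence "real (nat \<lceil>\<epsilon>\<rceil>) \<le> real n" by simp
        hence ne: "\<epsilon> \<le> real n" using real_nat_ceiling_ge[of \<epsilon>] by linarith
        have nr: "real n \<ge> 512" using n512 by simp
        define L where "L = ln (real n)"
        have L0: "L \<ge> 0" unfolding L_def using n512 by simp
        have W1: "1 \<le> W0 n" by (simp add: W0_def)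
        have Wle: "real (W0 n) \<le> 384 / \<epsilon> * L + 2"
        proof -
          have "real (nat \<lceil>384 / \<epsilon> * L\<rceil>) \<le> 384 / \<epsilon> * L + 1"
            using L0 assms by (simp add: of_nat_int_ceiling)
          thus ?thesis by (simp add: W0_def L_def)
        qed
        have Wge: "384 / \<epsilon> * L \<le> real (W0 n)"
          using real_nat_ceiling_ge[of "384 / \<epsilon> * L"] by (simp add: W0_def L_def)
        have Wn: "real (W0 n) \<le> real n / 128"
        proof -
          have "384 / \<epsilon> * L \<le> real n / 256" using elim(2) by (simp add: L_def field_simps)
          thus ?thesis using Wle nr by linarith
        qed
        have Tle: "real (T1 n) \<le> L / ln 2 + 1"
        proof -
          have "log 2 (real n) \<ge> 0" using n512 by simp
          hence "real (T1 n) \<le> log 2 (real n) + 1" by (simp add: T1_def of_nat_int_ceiling)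
          thus ?thesis by (simp add: L_def log_def)
        qed
        have Tge: "real n / 128 \<le> 2 ^ T1 n * real (W0 n)"
        proof -
          have "log 2 (real n) \<le> real (T1 n)" unfolding T1_def by (rule real_nat_ceiling_ge)
          hence "2 powr log 2 (real n) \<le> 2 powr real (T1 n)" by simp
          hence "real n \<le> 2 ^ T1 n" using n512 by (simp add: powr_realpow)
          moreover have "(1::real) \<le> real (W0 n)" using W1 by simp
          ultimately have "real n * 1 \<le> 2 ^ T1 n * real (W0 n)" by (intro mult_mono) auto
          thus ?thesis by simp
        qed
        have main: "1 - real n * real (T1 n + 65) * exp (- min (\<epsilon> * W0 n / 128) (real n / (64 * a)))
           \<le> measure_pmf.prob (gnp n (\<epsilon> / n))
             {R. \<exists>k. graph_diam n (G n \<union> R) = enat k \<and> k \<le> 2 * (W0 n + 4 * a + (T1 n + 65) * (4 * a + 1))}"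
          using G by (intro main_n[OF _ _ assms ea ne a0 na W1 Wn Tge]) auto
        have d_le: "real (2 * (W0 n + 4 * a + (T1 n + 65) * (4 * a + 1))) \<le> C * L"
        proof -
          have "real (2 * (W0 n + 4 * a + (T1 n + 65) * (4 * a + 1))) =
                2 * real (W0 n) + 8 * real a + 2 * (real (T1 n) + 65) * (4 * real a + 1)"
            by (simp add: algebra_simps)
          also have "\<dots> \<le> 2 * (384 / \<epsilon> * L + 2) + 8 * real a + 2 * (L / ln 2 + 1 + 65) * (4 * real a + 1)"
            using Wle Tle by (intro add_mono mult_right_mono mult_left_mono) auto
          also have "\<dots> = (768 / \<epsilon> + 2 * (4 * real a + 1) / ln 2) * L + K0"
            by (simp add: K0_def field_simps)
          also have "\<dots> \<le> (768 / \<epsilon> + 2 * (4 * real a + 1) / ln 2) * L + L"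
            using elim(4) by (simp add: L_def)
          also have "\<dots> = C * L" by (simp add: C_def algebra_simps)
          finally show ?thesis .
        qed
        have sub: "{R. \<exists>k. graph_diam n (G n \<union> R) = enat k \<and> k \<le> 2 * (W0 n + 4 * a + (T1 n + 65) * (4 * a + 1))}
            \<subseteq> {R. \<exists>k. graph_diam n (G n \<union> R) = enat k \<and> real k \<le> C * ln (real n)}"
        proof
          fix R assume "R \<in> {R. \<exists>k. graph_diam n (G n \<union> R) = enat k \<and> k \<le> 2 * (W0 n + 4 * a + (T1 n + 65) * (4 * a + 1))}"
          then obtain k where k: "graph_diam n (G n \<union> R) = enat k" "k \<le> 2 * (W0 n + 4 * a + (T1 n + 65) * (4 * a + 1))" by blast
          have "real k \<le> real (2 * (W0 n + 4 * a + (T1 n + 65) * (4 * a + 1)))" using k(2) by linarith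
          thus "R \<in> {R. \<exists>k. graph_diam n (G n \<union> R) = enat k \<and> real k \<le> C * ln (real n)}"
            using k(1) d_le by (auto simp: L_def)
        qed
        have dl: "exp (- min (\<epsilon> * W0 n / 128) (real n / (64 * a))) \<le> exp (- 3 * L)"
        proof -
          have "3 * L \<le> \<epsilon> * W0 n / 128" using Wge assms by (simp add: field_simps)
          moreover have "3 * L \<le> real n / (64 * a)" using elim(3) a0 by (simp add: L_def field_simps)
          ultimately show ?thesis by simp
        qed
        have e3: "exp (3 * L) = exp L ^ 3" using exp_of_nat_mult[of 3 L] by simp
        have "exp L = real n" using n512 by (simp add: L_def)
        hence eL: "exp (- 3 * L) = 1 / real n ^ 3" using e3 by (simp add: exp_minus field_simps)
        have "real n * real (T1 n + 65) * exp (- min (\<epsilon> * W0 n / 128) (real n / (64 * a)))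
              \<le> real n * real (T1 n + 65) * (1 / real n ^ 3)"
        proof -
          have dl': "exp (- min (\<epsilon> * W0 n / 128) (real n / (64 * a))) \<le> 1 / real n ^ 3"
            using dl eL by linarith
          show ?thesis by (intro mult_left_mono[OF dl']) auto
        qed
        also have "\<dots> = real (T1 n + 65) / real n ^ 2" using n512 by (simp add: power3_eq_cube power2_eq_square field_simps)
        also have "\<dots> \<le> f n"
        proof -
          have "real (T1 n + 65) \<le> log 2 (real n) + 66" using Tle by (simp add: L_def log_def)
          thus ?thesis unfolding f_def by (intro divide_right_mono) auto
        qed
        finally have "1 - f n \<le> 1 - real n * real (T1 n + 65) * exp (- min (\<epsilon> * W0 n / 128) (real n / (64 * a)))"
          by simp
        also have "\<dots> \<le> pr n" unfolding pr_def
          using main measure_pmf.finite_measure_mono[OF sub, of "gnp n (\<epsilon> / real n)"] by simp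
        finally show ?case .
      qed
    qed
    have "(pr \<longlongrightarrow> 1) sequentially"
    proof (rule real_tendsto_sandwich[OF ev])
      show "eventually (\<lambda>n. pr n \<le> 1) sequentially" by (simp add: pr_def)
      show "((\<lambda>n. 1 - f n) \<longlongrightarrow> 1) sequentially" using tendsto_diff[OF tendsto_const flim, of 1] by simp
    qed simp
    thus "((\<lambda>n. measure_pmf.prob (gnp n (\<epsilon> / real n))
                  {R. \<exists>k. graph_diam n (G n \<union> R) = enat k \<and> real k \<le> C * ln (real n)}) \<longlonglongrightarrow> 1)"
      unfolding pr_def .
  qed
qed

end
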